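(* Let $S(t)$ be an inverse subordinator, $T>0$, $Z_0>0$, $r\ge0$, $\sigma>0$, and let $f:[0,\infty)\to[0,\infty)$ be a continuous payoff function for which there is $c>0$ with $f(x)\le c|x|$ for all $x$. For $\tau>0$ and $n\in\mathbb N$ let $u_n=e^{\sigma\sqrt{\tau/n}}$, $d_n=1/u_n$, $R_n=e^{r\tau/n}$, $q_n=(R_n-d_n)/(u_n-d_n)$, and define the binomial (CRR) price $$V_n(\tau)=\frac{1}{R_n^{\,n}}\sum_{j=0}^n\binom{n}{j}q_n^j(1-q_n)^{n-j}f\big(Z_0u_n^jd_n^{\,n-j}\big).$$ Define the subordinated binomial price $C^{bin}_S(T)=\mathbb{E}\,V_n(S(T))$ and the subordinated Black–Scholes price $C_S(T)=\mathbb{E}\,V(S(T))$, where $V(\tau)=e^{-r\tau}\,\mathbb{E}\,f\big(Z_0\exp((r-\sigma^2/2)\tau+\sigma\sqrt\tau N)\big)$ with $N\sim\mathcal N(0,1)$ is the classical Black–Scholes price of the European option with payoff $f$ and maturity $\tau$. Then $$\lim_{n\to\infty}C^{bin}_S(T)=C_S(T).$$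
   Context: Inverse subordinator: let $\nu$ be a Lévy measure on $(0,\infty)$ with $\int_0^\infty \min(1,x)\,\nu(dx)<\infty$ and $\nu(0,\infty)=\infty$, $\psi(u)=\int_0^\infty(1-e^{-ux})\,\nu(dx)$, $U_\psi$ the subordinator with $\mathbb{E}e^{-uU_\psi(t)}=e^{-t\psi(u)}$, and $S(t)=\inf\{\tau>0:U_\psi(\tau)>t\}$. In the expectations $\mathbb{E}\,V_n(S(T))$ and $\mathbb{E}\,V(S(T))$ the tree parameters are evaluated at the random time $\tau=S(T)$ (the binomial tree is run over a randomized time horizon). $C_S(T)$ is the fair price of the European option with payoff $f$ in the subordinated Black–Scholes model with underlying $Z_0\exp(\mu S(t)+\sigma B(S(t)))$. *)

theory Defs
  imports "HOL-Probability.Probability"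
begin

text \<open>Levy measure on (0,infinity), represented as a measure on the Borel reals
  carrying no mass on the non-positive half-line.\<close>
definition levy_measure :: "real measure \<Rightarrow> bool" where
  "levy_measure \<nu> \<longleftrightarrow> sets \<nu> = sets borel \<and> emeasure \<nu> {..0} = 0
     \<and> (\<integral>\<^sup>+ x. ennreal (min 1 x) \<partial>\<nu>) < \<infinity>
     \<and> emeasure \<nu> {0<..} = \<infinity>"

definition laplace_exponent :: "real measure \<Rightarrow> real \<Rightarrow> real" where
  "laplace_exponent \<nu> u = (\<integral> x. (1 - exp (- u * x)) \<partial>\<nu>)"

text \<open>U is a subordinator on the probability space M with Laplace exponent psi:
  a Levy process (U 0 = 0, independent and stationary increments, right-continuous
  non-decreasing paths (left limits then exist automatically)) with E exp(-u U(t)) = exp(-t psi(u)).\<close>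
definition subordinator ::
  "'a measure \<Rightarrow> (real \<Rightarrow> 'a \<Rightarrow> real) \<Rightarrow> (real \<Rightarrow> real) \<Rightarrow> bool" where
  "subordinator M U \<psi> \<longleftrightarrow>
     prob_space M
   \<and> (\<forall>t\<ge>0. U t \<in> borel_measurable M)
   \<and> (\<forall>\<omega>\<in>space M. U 0 \<omega> = 0
        \<and> mono_on {0..} (\<lambda>t. U t \<omega>)
        \<and> (\<forall>t\<ge>0. continuous (at_right t) (\<lambda>s. U s \<omega>)))
   \<and> (\<forall>(n::nat) (ts::nat \<Rightarrow> real). 0 \<le> ts 0 \<and> (\<forall>i<n. ts i < ts (Suc i)) \<longrightarrow>
        prob_space.indep_vars M (\<lambda>_. borel) (\<lambda>i \<omega>. U (ts (Suc i)) \<omega> - U (ts i) \<omega>) {..<n})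
   \<and> (\<forall>s\<ge>0. \<forall>t\<ge>0. distr M borel (\<lambda>\<omega>. U (s + t) \<omega> - U s \<omega>) = distr M borel (U t))
   \<and> (\<forall>t\<ge>0. \<forall>u\<ge>0. prob_space.expectation M (\<lambda>\<omega>. exp (- u * U t \<omega>)) = exp (- t * \<psi> u))"

definition inverse_subordinator :: "(real \<Rightarrow> 'a \<Rightarrow> real) \<Rightarrow> real \<Rightarrow> 'a \<Rightarrow> real" where
  "inverse_subordinator U t \<omega> = Inf {\<tau>. \<tau> > 0 \<and> U \<tau> \<omega> > t}"

definition crr_price ::
  "real \<Rightarrow> real \<Rightarrow> real \<Rightarrow> (real \<Rightarrow> real) \<Rightarrow> nat \<Rightarrow> real \<Rightarrow> real" where
  "crr_price r \<sigma> Z0 f n \<tau> =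
     (let u = exp (\<sigma> * sqrt (\<tau> / real n)); d = 1 / u; R = exp (r * \<tau> / real n);
          q = (R - d) / (u - d)
      in (1 / R ^ n) * (\<Sum>j=0..n. real (n choose j) * q ^ j * (1 - q) ^ (n - j)
                                   * f (Z0 * u ^ j * d ^ (n - j))))"

definition bs_price ::
  "real \<Rightarrow> real \<Rightarrow> real \<Rightarrow> (real \<Rightarrow> real) \<Rightarrow> real \<Rightarrow> real" where
  "bs_price r \<sigma> Z0 f \<tau> =
     exp (- r * \<tau>) * (\<integral> x. f (Z0 * exp ((r - \<sigma>\<^sup>2 / 2) * \<tau> + \<sigma> * sqrt \<tau> * x))
                           \<partial>std_normal_distribution)"

end

theory Submission
  imports Defs "HOL-Real_Asymp.Real_Asymp"
begin

lemma exp_limit_complex: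
  fixes z :: "nat \<Rightarrow> complex"
  assumes lim: "z \<longlonglongrightarrow> w"
  shows "(\<lambda>n. (1 + z n / of_nat n) ^ n) \<longlonglongrightarrow> exp w"
proof -
  obtain B where B: "\<And>n. norm (z n) \<le> B" and "B > 0"
    using convergent_imp_Bseq[of z] lim by (auto simp: Bseq_def convergent_def)
  define e where "e n = z n / of_nat n" for n
  have ev: "eventually (\<lambda>n. norm (e n) < 1/2) sequentially"
  proof -
    have "eventually (\<lambda>n. real n > 2 * B) sequentially"
      by real_asymp
    then show ?thesis
    proof (rule eventually_mono)
      fix n assume n: "real n > 2 * B"
      then have "n > 0" using \<open>B>0\<close> by (auto intro: ccontr)
      have "norm (e n) = norm (z n) / real n" by (simp add: e_def norm_divide)
      also have "\<dots> \<le> B / real n" using B[of n] \<open>n>0\<close> by (simp add: divide_right_mono)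
      also have "\<dots> < 1/2" using n \<open>n>0\<close> by (simp add: field_simps)
      finally show "norm (e n) < 1/2" .
    qed
  qed
  have eq: "eventually (\<lambda>n. (1 + z n / of_nat n) ^ n = exp (of_nat n * Ln (1 + e n))) sequentially"
    using ev
  proof (rule eventually_mono)
    fix n assume "norm (e n) < 1/2"
    then have "1 + e n \<noteq> 0"
    proof (intro notI)
      assume "1 + e n = 0" then have "e n = -1" by (simp add: add_eq_0_iff)
      with \<open>norm (e n) < 1/2\<close> show False by simp
    qed
    then show "(1 + z n / of_nat n) ^ n = exp (of_nat n * Ln (1 + e n))"
      by (simp add: exp_of_nat_mult e_def)
  qed
  have small: "eventually (\<lambda>n. norm (of_nat n * Ln (1 + e n) - z n) \<le> 2 * B^2 / real n) sequentially"
    using ev eventually_gt_at_top[of 0]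
  proof (eventually_elim)
    case (elim n)
    have "norm (Ln (1 + e n) - e n) \<le> norm (e n)^2 / (1 - norm (e n))"
      using elim by (intro Ln_approx_linear) auto
    also have "\<dots> \<le> norm (e n)^2 / (1/2)"
      using elim by (intro divide_left_mono) auto
    also have "\<dots> = 2 * norm (e n)^2" by simp
    finally have *: "norm (Ln (1 + e n) - e n) \<le> 2 * norm (e n)^2" .
    have "of_nat n * Ln (1 + e n) - z n = of_nat n * (Ln (1 + e n) - e n)"
      using elim by (simp add: e_def field_simps)
    then have "norm (of_nat n * Ln (1 + e n) - z n) = real n * norm (Ln (1 + e n) - e n)"
      by (simp add: norm_mult)
    also have "\<dots> \<le> real n * (2 * norm (e n)^2)"
      using * by (intro mult_left_mono) auto
    also have "\<dots> = 2 * norm (z n)^2 / real n"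
      using elim by (simp add: e_def norm_divide power2_eq_square field_simps)
    also have "\<dots> \<le> 2 * B^2 / real n"
      using B[of n] elim by (intro divide_right_mono mult_left_mono power_mono) auto
    finally show ?case .
  qed
  have "(\<lambda>n. 2 * B^2 / real n) \<longlonglongrightarrow> 0" by real_asymp
  then have "(\<lambda>n. of_nat n * Ln (1 + e n) - z n) \<longlonglongrightarrow> 0"
    using small by (rule Lim_null_comparison[rotated])
  then have "(\<lambda>n. (of_nat n * Ln (1 + e n) - z n) + z n) \<longlonglongrightarrow> 0 + w"
    using lim by (intro tendsto_add)
  then have "(\<lambda>n. exp (of_nat n * Ln (1 + e n))) \<longlonglongrightarrow> exp w"
    by (intro tendsto_exp) simp
  moreover have "eventually (\<lambda>n. exp (of_nat n * Ln (1 + e n)) = (1 + z n / of_nat n) ^ n) sequentially"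
    using eq by (simp add: eq_commute)
  ultimately show ?thesis by (rule Lim_transform_eventually)
qed

lemma aux_Q: fixes s u d R :: real shows "s > 0 \<Longrightarrow> u - d > 0 \<Longrightarrow> (2*((R-1)/s^2) - (u+d-2)/s^2)/((u - d)/s) = (2*((R-d)/(u-d)) - 1)/s"
  by (simp add: field_simps power2_eq_square)


lemma lim_E1:
  fixes r :: real assumes "r \<ge> 0"
  shows "((\<lambda>s. (exp (r * s^2) - 1) / s^2) \<longlongrightarrow> r) (at_right 0)"
proof (cases "r = 0")
  case True then show ?thesis by simp
next
  case False then have "r > 0" using assms by simp
  then show ?thesis by real_asymp
qed

lemma lim_E2:
  fixes \<sigma> :: real assumes "\<sigma> > 0"
  shows "((\<lambda>s. (exp (\<sigma> * s) + exp (- \<sigma> * s) - 2) / s^2) \<longlongrightarrow> \<sigma> * \<sigma>) (at_right 0)"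
  using assms by real_asymp

lemma lim_E3:
  fixes \<sigma> :: real assumes "\<sigma> > 0"
  shows "((\<lambda>s. (exp (\<sigma> * s) - exp (- \<sigma> * s)) / s) \<longlongrightarrow> 2 * \<sigma>) (at_right 0)"
  using assms by real_asymp

lemma lim_cos:
  fixes a :: real
  shows "((\<lambda>s. (cos (a * s) - 1) / s^2) \<longlongrightarrow> - (a^2) / 2) (at_right 0)"
proof (cases "a = 0")
  case True then show ?thesis by simp
next
  case False
  have g: "((\<lambda>x::real. (cos x - 1)/x^2) \<longlongrightarrow> -1/2) (at 0)" by real_asymp
  have "filterlim (\<lambda>s. a * s) (at 0) (at_right 0)"
  proof (rule filterlim_atI)
    show "((\<lambda>s. a * s) \<longlongrightarrow> 0) (at_right 0)"
      by (auto intro!: tendsto_eq_intros)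
    show "\<forall>\<^sub>F s in at_right 0. a * s \<noteq> 0"
      using False by (auto simp: eventually_at_right_field intro: exI[of _ 1])
  qed
  from filterlim_compose[OF g this]
  have "((\<lambda>s. (cos (a * s) - 1) / (a * s)^2) \<longlongrightarrow> -1/2) (at_right 0)" .
  then have "((\<lambda>s. a^2 * ((cos (a * s) - 1) / (a * s)^2)) \<longlongrightarrow> a^2 * (-1/2)) (at_right 0)"
    by (intro tendsto_mult tendsto_const)
  moreover have "\<forall>\<^sub>F s in at_right 0. a^2 * ((cos (a * s) - 1) / (a * s)^2) = (cos (a * s) - 1) / s^2"
    using False by (auto simp: eventually_at_right_field power_mult_distrib intro!: exI[of _ 1])
  ultimately show ?thesis
    by (auto elim: Lim_transform_eventually)
qed

lemma lim_sin:
  fixes a :: real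
  shows "((\<lambda>s. sin (a * s) / s) \<longlongrightarrow> a) (at_right 0)"
proof (cases "a = 0")
  case True then show ?thesis by simp
next
  case False
  have g: "((\<lambda>x::real. sin x / x) \<longlongrightarrow> 1) (at 0)" by real_asymp
  have "filterlim (\<lambda>s. a * s) (at 0) (at_right 0)"
  proof (rule filterlim_atI)
    show "((\<lambda>s. a * s) \<longlongrightarrow> 0) (at_right 0)"
      by (auto intro!: tendsto_eq_intros)
    show "\<forall>\<^sub>F s in at_right 0. a * s \<noteq> 0"
      using False by (auto simp: eventually_at_right_field intro: exI[of _ 1])
  qed
  from filterlim_compose[OF g this]
  have "((\<lambda>s. sin (a * s) / (a * s)) \<longlongrightarrow> 1) (at_right 0)" .
  then have "((\<lambda>s. a * (sin (a * s) / (a * s))) \<longlongrightarrow> a * 1) (at_right 0)"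
    by (intro tendsto_mult tendsto_const)
  moreover have "\<forall>\<^sub>F s in at_right 0. a * (sin (a * s) / (a * s)) = sin (a * s) / s"
    using False by (auto simp: eventually_at_right_field intro!: exI[of _ 1])
  ultimately show ?thesis
    by (auto elim: Lim_transform_eventually)
qed

definition QQ :: "real \<Rightarrow> real \<Rightarrow> real \<Rightarrow> real" where
  "QQ r \<sigma> s = (exp (r * s^2) - exp (- \<sigma> * s)) / (exp (\<sigma> * s) - exp (- \<sigma> * s))"

lemma lim_Q:
  fixes r \<sigma> :: real assumes "r \<ge> 0" "\<sigma> > 0"
  shows "((\<lambda>s. (2 * QQ r \<sigma> s - 1) / s) \<longlongrightarrow> (2 * r - \<sigma> * \<sigma>) / (2 * \<sigma>)) (at_right 0)"
proof -
  have "((\<lambda>s. (2 * ((exp (r * s^2) - 1) / s^2) - (exp (\<sigma> * s) + exp (- \<sigma> * s) - 2) / s^2)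
          / ((exp (\<sigma> * s) - exp (- \<sigma> * s)) / s)) \<longlongrightarrow> (2 * r - \<sigma> * \<sigma>) / (2 * \<sigma>)) (at_right 0)"
    using assms by (intro tendsto_intros lim_E1 lim_E2 lim_E3) auto
  moreover have "\<forall>\<^sub>F s in at_right 0. (2 * ((exp (r * s^2) - 1) / s^2) - (exp (\<sigma> * s) + exp (- \<sigma> * s) - 2) / s^2)
          / ((exp (\<sigma> * s) - exp (- \<sigma> * s)) / s) = (2 * QQ r \<sigma> s - 1) / s"
  proof (rule eventually_at_rightI[of 0 1])
    fix s :: real assume "s \<in> {0<..<1}"
    then have s: "0 < s \<and> s < 1" by simp
    have pos: "exp (\<sigma> * s) - exp (- \<sigma> * s) > 0" using s assms by simp
    show "(2 * ((exp (r * s^2) - 1) / s^2) - (exp (\<sigma> * s) + exp (- \<sigma> * s) - 2) / s^2)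
          / ((exp (\<sigma> * s) - exp (- \<sigma> * s)) / s) = (2 * QQ r \<sigma> s - 1) / s"
      using s pos unfolding QQ_def by (intro aux_Q) auto
  qed simp
  ultimately show ?thesis by (auto elim: Lim_transform_eventually)
qed

lemma lim_sq:
  fixes r \<sigma> :: real assumes "r \<ge> 0" "\<sigma> > 0"
  shows "((\<lambda>s. (exp (r * s^2) * (exp (\<sigma> * s) + exp (- \<sigma> * s)) - 2) / s^2) \<longlongrightarrow> 2 * r + \<sigma> * \<sigma>) (at_right 0)"
proof -
  have "((\<lambda>s. ((exp (r * s^2) - 1) / s^2) * (exp (\<sigma> * s) + exp (- \<sigma> * s)) + (exp (\<sigma> * s) + exp (- \<sigma> * s) - 2) / s^2)
         \<longlongrightarrow> r * (exp (\<sigma> * 0) + exp (- \<sigma> * 0)) + \<sigma> * \<sigma>) (at_right 0)"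
    using assms by (intro tendsto_intros lim_E1 lim_E2) auto
  then have "((\<lambda>s. ((exp (r * s^2) - 1) / s^2) * (exp (\<sigma> * s) + exp (- \<sigma> * s)) + (exp (\<sigma> * s) + exp (- \<sigma> * s) - 2) / s^2)
         \<longlongrightarrow> 2 * r + \<sigma> * \<sigma>) (at_right 0)"
    by (rule tendsto_eq_rhs) simp
  moreover have "\<forall>\<^sub>F s in at_right 0. ((exp (r * s^2) - 1) / s^2) * (exp (\<sigma> * s) + exp (- \<sigma> * s)) + (exp (\<sigma> * s) + exp (- \<sigma> * s) - 2) / s^2
     = (exp (r * s^2) * (exp (\<sigma> * s) + exp (- \<sigma> * s)) - 2) / s^2"
    unfolding eventually_at_right_field
    by (intro exI[of _ 1]) (auto simp: field_simps)
  ultimately show ?thesis by (auto elim: Lim_transform_eventually)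
qed

lemma aux_sq: fixes u d R :: real
  assumes "u - d > 0" "d * u = 1"
  shows "((R-d)/(u-d)) * u^2 + (1 - (R-d)/(u-d)) * d^2 - 1 = R * (u + d) - 2"
proof -
  have 1: "((R-d)/(u-d)) * u^2 + (1 - (R-d)/(u-d)) * d^2 = d^2 + ((R-d)/(u-d)) * (u^2 - d^2)"
    by (simp add: algebra_simps)
  have 2: "u^2 - d^2 = (u-d)*(u+d)" by (simp add: algebra_simps power2_eq_square)
  have 3: "((R-d)/(u-d)) * ((u-d)*(u+d)) = (R-d)*(u+d)" using assms by simp
  have "((R-d)/(u-d)) * u^2 + (1 - (R-d)/(u-d)) * d^2 = d^2 + (R-d)*(u+d)"
    using 1 2 3 by simp
  also have "\<dots> = R * (u+d) - d * u" by (simp add: algebra_simps power2_eq_square)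
  finally show ?thesis using assms by simp
qed

lemma s_lim: fixes \<tau> :: real assumes "\<tau> > 0" shows "filterlim (\<lambda>n. sqrt (\<tau> / real n)) (at_right 0) sequentially"
  using assms by real_asymp

lemma s_sq: fixes \<tau> :: real assumes "\<tau> > 0" "n > 0" shows "\<tau> / (sqrt (\<tau> / real n))^2 = real n"
  using assms by simp

lemma seq_cos:
  fixes \<tau> a :: real assumes "\<tau> > 0"
  shows "(\<lambda>n. real n * (cos (a * sqrt (\<tau> / real n)) - 1)) \<longlonglongrightarrow> \<tau> * (- (a^2) / 2)"
proof -
  have "(\<lambda>n. \<tau> * ((cos (a * sqrt (\<tau> / real n)) - 1) / (sqrt (\<tau> / real n))^2)) \<longlonglongrightarrow> \<tau> * (- (a^2) / 2)"
    by (intro tendsto_mult tendsto_const filterlim_compose[OF lim_cos s_lim[OF assms]])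
  moreover have "eventually (\<lambda>n. \<tau> * ((cos (a * sqrt (\<tau> / real n)) - 1) / (sqrt (\<tau> / real n))^2)
       = real n * (cos (a * sqrt (\<tau> / real n)) - 1)) sequentially"
    using eventually_gt_at_top[of "0::nat"]
  proof eventually_elim
    case (elim n)
    then have "\<tau> / (sqrt (\<tau> / real n))^2 = real n" using s_sq assms by blast
    moreover have "\<And>X y. \<tau> * (X / y) = (\<tau> / y) * X" by simp
    ultimately show ?case by metis
  qed
  ultimately show ?thesis by (rule Lim_transform_eventually)
qed

lemma seq_sinq:
  fixes \<tau> a r \<sigma> :: real assumes "\<tau> > 0" "r \<ge> 0" "\<sigma> > 0"
  shows "(\<lambda>n. real n * (2 * QQ r \<sigma> (sqrt (\<tau> / real n)) - 1) * sin (a * sqrt (\<tau> / real n)))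
     \<longlonglongrightarrow> \<tau> * ((2 * r - \<sigma> * \<sigma>) / (2 * \<sigma>) * a)"
proof -
  have "(\<lambda>n. \<tau> * ((2 * QQ r \<sigma> (sqrt (\<tau> / real n)) - 1) / sqrt (\<tau> / real n)
     * (sin (a * sqrt (\<tau> / real n)) / sqrt (\<tau> / real n)))) \<longlonglongrightarrow> \<tau> * ((2 * r - \<sigma> * \<sigma>) / (2 * \<sigma>) * a)"
    by (intro tendsto_mult tendsto_const filterlim_compose[OF lim_sin s_lim[OF assms(1)]]
        filterlim_compose[OF lim_Q[OF assms(2,3)] s_lim[OF assms(1)]])
  moreover have "eventually (\<lambda>n. \<tau> * ((2 * QQ r \<sigma> (sqrt (\<tau> / real n)) - 1) / sqrt (\<tau> / real n)
     * (sin (a * sqrt (\<tau> / real n)) / sqrt (\<tau> / real n)))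
       = real n * (2 * QQ r \<sigma> (sqrt (\<tau> / real n)) - 1) * sin (a * sqrt (\<tau> / real n))) sequentially"
    using eventually_gt_at_top[of "0::nat"]
  proof eventually_elim
    case (elim n)
    define s where "s = sqrt (\<tau> / real n)"
    have n: "\<tau> / s^2 = real n" using s_sq assms elim by (simp add: s_def)
    have "\<And>X Y. \<tau> * (X / s * (Y / s)) = (\<tau> / s^2) * X * Y" by (simp add: power2_eq_square)
    then show ?case unfolding s_def[symmetric] using n by metis
  qed
  ultimately show ?thesis by (rule Lim_transform_eventually)
qed

lemma seq_sq:
  fixes \<tau> r \<sigma> :: real assumes "\<tau> > 0" "r \<ge> 0" "\<sigma> > 0"
  shows "(\<lambda>n. real n * (QQ r \<sigma> (sqrt (\<tau> / real n)) * exp (\<sigma> * sqrt (\<tau> / real n))^2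
          + (1 - QQ r \<sigma> (sqrt (\<tau> / real n))) * exp (- \<sigma> * sqrt (\<tau> / real n))^2 - 1))
     \<longlonglongrightarrow> \<tau> * (2 * r + \<sigma> * \<sigma>)"
proof -
  have "(\<lambda>n. \<tau> * ((exp (r * (sqrt (\<tau> / real n))^2) * (exp (\<sigma> * sqrt (\<tau> / real n)) + exp (- \<sigma> * sqrt (\<tau> / real n))) - 2) / (sqrt (\<tau> / real n))^2))
     \<longlonglongrightarrow> \<tau> * (2 * r + \<sigma> * \<sigma>)"
    by (intro tendsto_mult tendsto_const filterlim_compose[OF lim_sq[OF assms(2,3)] s_lim[OF assms(1)]])
  moreover have "eventually (\<lambda>n. \<tau> * ((exp (r * (sqrt (\<tau> / real n))^2) * (exp (\<sigma> * sqrt (\<tau> / real n)) + exp (- \<sigma> * sqrt (\<tau> / real n))) - 2) / (sqrt (\<tau> / real n))^2)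
     = real n * (QQ r \<sigma> (sqrt (\<tau> / real n)) * exp (\<sigma> * sqrt (\<tau> / real n))^2
          + (1 - QQ r \<sigma> (sqrt (\<tau> / real n))) * exp (- \<sigma> * sqrt (\<tau> / real n))^2 - 1)) sequentially"
    using eventually_gt_at_top[of "0::nat"]
  proof eventually_elim
    case (elim n)
    define s where "s = sqrt (\<tau> / real n)"
    have s: "s > 0" using elim assms by (simp add: s_def)
    have n: "\<tau> / s^2 = real n" using s_sq assms elim by (simp add: s_def)
    have "QQ r \<sigma> s * exp (\<sigma> * s)^2 + (1 - QQ r \<sigma> s) * exp (- \<sigma> * s)^2 - 1
        = exp (r * s^2) * (exp (\<sigma> * s) + exp (- \<sigma> * s)) - 2"
      unfolding QQ_def using s assms by (intro aux_sq) (auto simp: exp_add[symmetric])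
    moreover have "\<And>X y. \<tau> * (X / y) = (\<tau> / y) * X" by simp
    ultimately show ?case unfolding s_def[symmetric] using n by metis
  qed
  ultimately show ?thesis by (rule Lim_transform_eventually)
qed

definition pp :: "real \<Rightarrow> real \<Rightarrow> real \<Rightarrow> nat \<Rightarrow> real" where
  "pp r \<sigma> \<tau> n = min 1 (max 0 (QQ r \<sigma> (sqrt (\<tau> / real n))))"

definition xx :: "real \<Rightarrow> real \<Rightarrow> nat \<Rightarrow> nat \<Rightarrow> real" where
  "xx \<sigma> \<tau> n j = \<sigma> * sqrt (\<tau> / real n) * (2 * real j - real n)"

definition mu_n :: "real \<Rightarrow> real \<Rightarrow> real \<Rightarrow> nat \<Rightarrow> real measure" where
  "mu_n r \<sigma> \<tau> n = distr (measure_pmf (binomial_pmf n (pp r \<sigma> \<tau> n))) borel (xx \<sigma> \<tau> n)"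

definition mu_lim :: "real \<Rightarrow> real \<Rightarrow> real \<Rightarrow> real measure" where
  "mu_lim r \<sigma> \<tau> = distr std_normal_distribution borel (\<lambda>x. (r - \<sigma>^2/2) * \<tau> + \<sigma> * sqrt \<tau> * x)"

lemma pp_range: "0 \<le> pp r \<sigma> \<tau> n" "pp r \<sigma> \<tau> n \<le> 1"
  by (auto simp: pp_def)

lemma real_distr_mu_n: "real_distribution (mu_n r \<sigma> \<tau> n)"
  unfolding mu_n_def by (rule prob_space.real_distribution_distr[OF prob_space_measure_pmf]) simp

lemma real_distr_mu_lim: "real_distribution (mu_lim r \<sigma> \<tau>)"
proof -
  interpret N: real_distribution std_normal_distribution by (rule real_dist_normal_dist)
  show ?thesis unfolding mu_lim_def by (rule N.real_distribution_distr) simp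
qed

lemma integral_mu_n:
  fixes g :: "real \<Rightarrow> 'b::{banach, second_countable_topology}"
  assumes [measurable]: "g \<in> borel_measurable borel"
  shows "integral\<^sup>L (mu_n r \<sigma> \<tau> n) g =
    (\<Sum>j\<le>n. (real (n choose j) * pp r \<sigma> \<tau> n ^ j * (1 - pp r \<sigma> \<tau> n) ^ (n - j)) *\<^sub>R g (xx \<sigma> \<tau> n j))"
proof -
  have "integral\<^sup>L (mu_n r \<sigma> \<tau> n) g = (\<integral>j. g (xx \<sigma> \<tau> n j) \<partial>measure_pmf (binomial_pmf n (pp r \<sigma> \<tau> n)))"
    unfolding mu_n_def by (subst integral_distr) auto
  also have "\<dots> = (\<Sum>j\<in>{..n}. pmf (binomial_pmf n (pp r \<sigma> \<tau> n)) j *\<^sub>R g (xx \<sigma> \<tau> n j))"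
    by (rule integral_measure_pmf) (use pp_range in \<open>auto simp: set_pmf_binomial_eq split: if_splits\<close>)
  also have "\<dots> = (\<Sum>j\<le>n. (real (n choose j) * pp r \<sigma> \<tau> n ^ j * (1 - pp r \<sigma> \<tau> n) ^ (n - j)) *\<^sub>R g (xx \<sigma> \<tau> n j))"
    using pp_range by simp
  finally show ?thesis .
qed

lemma iexp_xx:
  assumes "j \<le> n"
  shows "iexp (t * xx \<sigma> \<tau> n j) = iexp (t * \<sigma> * sqrt (\<tau> / real n)) ^ j * iexp (- (t * \<sigma> * sqrt (\<tau> / real n))) ^ (n - j)"
proof -
  define \<theta> where "\<theta> = t * \<sigma> * sqrt (\<tau> / real n)"
  have e1: "iexp (\<theta>) ^ j = exp (of_nat j * (\<i> * of_real \<theta>))"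
    by (simp only: exp_of_nat_mult)
  have e2: "iexp (- \<theta>) ^ (n - j) = exp (of_nat (n - j) * (\<i> * of_real (- \<theta>)))"
    by (simp only: exp_of_nat_mult)
  have "iexp (\<theta>) ^ j * iexp (- \<theta>) ^ (n - j) = exp (of_nat j * (\<i> * of_real \<theta>)) * exp (of_nat (n - j) * (\<i> * of_real (- \<theta>)))"
    by (simp only: e1 e2)
  also have "\<dots> = exp (of_nat j * (\<i> * of_real \<theta>) + of_nat (n - j) * (\<i> * of_real (- \<theta>)))"
    by (simp only: exp_add)
  also have "of_nat j * (\<i> * of_real \<theta>) + of_nat (n - j) * (\<i> * of_real (- \<theta>)) = \<i> * of_real (t * xx \<sigma> \<tau> n j)"
    using assms by (simp add: xx_def \<theta>_def of_nat_diff algebra_simps)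
  finally show ?thesis by (simp add: \<theta>_def)
qed

lemma char_mu_n:
  "char (mu_n r \<sigma> \<tau> n) t = (of_real (pp r \<sigma> \<tau> n) * iexp (t * \<sigma> * sqrt (\<tau> / real n))
      + of_real (1 - pp r \<sigma> \<tau> n) * iexp (- (t * \<sigma> * sqrt (\<tau> / real n)))) ^ n"
proof -
  define p where "p = pp r \<sigma> \<tau> n"
  define \<theta> where "\<theta> = t * \<sigma> * sqrt (\<tau> / real n)"
  have "char (mu_n r \<sigma> \<tau> n) t = (\<Sum>j\<le>n. (real (n choose j) * p ^ j * (1 - p) ^ (n - j)) *\<^sub>R iexp (t * xx \<sigma> \<tau> n j))"
    unfolding char_def p_def by (rule integral_mu_n) simp
  also have "\<dots> = (\<Sum>j\<le>n. of_nat (n choose j) * (of_real p * iexp \<theta>) ^ j * (of_real (1 - p) * iexp (- \<theta>)) ^ (n - j))"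
  proof (rule sum.cong)
    fix j assume "j \<in> {..n}"
    then have "j \<le> n" by simp
    show "(real (n choose j) * p ^ j * (1 - p) ^ (n - j)) *\<^sub>R iexp (t * xx \<sigma> \<tau> n j) =
      of_nat (n choose j) * (of_real p * iexp \<theta>) ^ j * (of_real (1 - p) * iexp (- \<theta>)) ^ (n - j)"
      unfolding iexp_xx[OF \<open>j \<le> n\<close>] \<theta>_def[symmetric]
      by (simp add: scaleR_conv_of_real power_mult_distrib)
  qed simp
  also have "\<dots> = (of_real p * iexp \<theta> + of_real (1 - p) * iexp (- \<theta>)) ^ n"
    by (subst binomial_ring) (simp add: atLeast0AtMost)
  finally show ?thesis by (simp add: p_def \<theta>_def)
qed

lemma char_mu_lim:
  "char (mu_lim r \<sigma> \<tau>) t = iexp (t * ((r - \<sigma>^2/2) * \<tau>)) * of_real (exp (- ((t * \<sigma> * sqrt \<tau>)^2) / 2))"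
proof -
  have "char (mu_lim r \<sigma> \<tau>) t = (\<integral>x. iexp (t * ((r - \<sigma>^2/2) * \<tau> + \<sigma> * sqrt \<tau> * x)) \<partial>std_normal_distribution)"
    unfolding char_def mu_lim_def by (subst integral_distr) auto
  also have "\<dots> = (\<integral>x. iexp (t * ((r - \<sigma>^2/2) * \<tau>)) * iexp ((t * \<sigma> * sqrt \<tau>) * x) \<partial>std_normal_distribution)"
    by (intro Bochner_Integration.integral_cong refl) (simp add: exp_add[symmetric] algebra_simps)
  also have "\<dots> = iexp (t * ((r - \<sigma>^2/2) * \<tau>)) * char std_normal_distribution (t * \<sigma> * sqrt \<tau>)"
    unfolding char_def by simp
  finally show ?thesis by (simp add: char_std_normal_distribution)
qed

lemma ev_small: fixes \<tau> c :: real assumes "\<tau> > 0" "c > 0"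
  shows "eventually (\<lambda>n. sqrt (\<tau> / real n) < c) sequentially"
  using assms by real_asymp

lemma QQ_range:
  fixes r \<sigma> s :: real
  assumes "r \<ge> 0" "\<sigma> > 0" "s > 0" "r * s \<le> \<sigma>"
  shows "0 \<le> QQ r \<sigma> s" "QQ r \<sigma> s \<le> 1"
proof -
  have ud: "exp (\<sigma> * s) - exp (- \<sigma> * s) > 0" using assms by simp
  have "exp (- \<sigma> * s) < 1" using assms by simp
  also have "1 \<le> exp (r * s^2)" using assms by simp
  finally show "0 \<le> QQ r \<sigma> s" unfolding QQ_def using ud by simp
  have "r * s^2 \<le> \<sigma> * s" using assms by (simp add: power2_eq_square mult.assoc[symmetric] mult_right_mono)
  then have "exp (r * s^2) \<le> exp (\<sigma> * s)" by simp
  then show "QQ r \<sigma> s \<le> 1" unfolding QQ_def using ud by (simp add: divide_le_eq_1)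
qed

lemma ev_q:
  fixes \<tau> r \<sigma> :: real assumes "\<tau> > 0" "r \<ge> 0" "\<sigma> > 0"
  shows "eventually (\<lambda>n. n > 0 \<and> pp r \<sigma> \<tau> n = QQ r \<sigma> (sqrt (\<tau> / real n)) \<and> r * sqrt (\<tau> / real n) \<le> \<sigma>) sequentially"
proof -
  have c: "\<sigma> / (r + 1) > 0" using assms by simp
  show ?thesis
  using ev_small[OF assms(1) c] eventually_gt_at_top[of "0::nat"]
proof eventually_elim
  case (elim n)
  define s where "s = sqrt (\<tau> / real n)"
  have s: "s > 0" "s < \<sigma> / (r + 1)" using elim assms by (auto simp: s_def)
  have "r * s \<le> (r + 1) * s" using s by simp
  also have "\<dots> \<le> \<sigma>" using s assms by (simp add: field_simps)
  finally have rs: "r * s \<le> \<sigma>" .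
  show ?case using QQ_range[OF assms(2,3) s(1) rs] elim rs unfolding pp_def s_def by simp
qed
qed

lemma w_eq:
  fixes q \<theta> :: real and n :: nat assumes "n > 0"
  shows "of_real q * iexp \<theta> + of_real (1 - q) * iexp (- \<theta>) =
    1 + Complex (real n * (cos \<theta> - 1)) (real n * (2 * q - 1) * sin \<theta>) / of_nat n"
  using assms apply (simp add: complex_eq_iff Re_exp Im_exp algebra_simps)
  apply (simp add: field_simps)
  done

lemma char_conv:
  fixes \<tau> r \<sigma> t :: real assumes "\<tau> > 0" "r \<ge> 0" "\<sigma> > 0"
  shows "(\<lambda>n. char (mu_n r \<sigma> \<tau> n) t) \<longlonglongrightarrow> char (mu_lim r \<sigma> \<tau>) t"
proof -
  define z where "z n = Complex (real n * (cos (t * \<sigma> * sqrt (\<tau> / real n)) - 1))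
      (real n * (2 * QQ r \<sigma> (sqrt (\<tau> / real n)) - 1) * sin (t * \<sigma> * sqrt (\<tau> / real n)))" for n
  have "z \<longlonglongrightarrow> Complex (\<tau> * (- ((t * \<sigma>)^2) / 2)) (\<tau> * ((2 * r - \<sigma> * \<sigma>) / (2 * \<sigma>) * (t * \<sigma>)))"
    unfolding z_def using assms
    by (intro tendsto_Complex seq_cos seq_sinq)
  from exp_limit_complex[OF this]
  have lim: "(\<lambda>n. (1 + z n / of_nat n) ^ n) \<longlonglongrightarrow> exp (Complex (\<tau> * (- ((t * \<sigma>)^2) / 2)) (\<tau> * ((2 * r - \<sigma> * \<sigma>) / (2 * \<sigma>) * (t * \<sigma>))))" .
  have "Complex (\<tau> * (- ((t * \<sigma>)^2) / 2)) (\<tau> * ((2 * r - \<sigma> * \<sigma>) / (2 * \<sigma>) * (t * \<sigma>)))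
      = \<i> * of_real (t * ((r - \<sigma>^2/2) * \<tau>)) + of_real (- ((t * \<sigma> * sqrt \<tau>)^2) / 2)"
    using assms by (simp add: complex_eq_iff power_mult_distrib field_simps power2_eq_square)
  then have "exp (Complex (\<tau> * (- ((t * \<sigma>)^2) / 2)) (\<tau> * ((2 * r - \<sigma> * \<sigma>) / (2 * \<sigma>) * (t * \<sigma>))))
    = iexp (t * ((r - \<sigma>^2/2) * \<tau>)) * exp (of_real (- ((t * \<sigma> * sqrt \<tau>)^2) / 2))"
    by (simp only: exp_add)
  then have "exp (Complex (\<tau> * (- ((t * \<sigma>)^2) / 2)) (\<tau> * ((2 * r - \<sigma> * \<sigma>) / (2 * \<sigma>) * (t * \<sigma>))))
     = char (mu_lim r \<sigma> \<tau>) t"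
    unfolding char_mu_lim by (simp only: exp_of_real)
  with lim have lim': "(\<lambda>n. (1 + z n / of_nat n) ^ n) \<longlonglongrightarrow> char (mu_lim r \<sigma> \<tau>) t" by simp
  have "eventually (\<lambda>n. (1 + z n / of_nat n) ^ n = char (mu_n r \<sigma> \<tau> n) t) sequentially"
    using ev_q[OF assms]
  proof eventually_elim
    case (elim n)
    then have n: "n > 0" and p: "pp r \<sigma> \<tau> n = QQ r \<sigma> (sqrt (\<tau> / real n))" by auto
    have "char (mu_n r \<sigma> \<tau> n) t = (of_real (QQ r \<sigma> (sqrt (\<tau> / real n))) * iexp (t * \<sigma> * sqrt (\<tau> / real n))
      + of_real (1 - QQ r \<sigma> (sqrt (\<tau> / real n))) * iexp (- (t * \<sigma> * sqrt (\<tau> / real n)))) ^ n"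
      by (simp only: char_mu_n p)
    also have "\<dots> = (1 + z n / of_nat n) ^ n"
      by (simp only: w_eq[OF n] z_def)
    finally show ?case by simp
  qed
  with lim' show ?thesis by (rule Lim_transform_eventually)
qed

lemma weak_conv_mu:
  fixes \<tau> r \<sigma> :: real assumes "\<tau> > 0" "r \<ge> 0" "\<sigma> > 0"
  shows "weak_conv_m (mu_n r \<sigma> \<tau>) (mu_lim r \<sigma> \<tau>)"
  by (rule levy_continuity[OF real_distr_mu_n real_distr_mu_lim char_conv[OF assms]])

lemma integral_conv_bdd:
  fixes \<tau> r \<sigma> B :: real and g :: "real \<Rightarrow> real"
  assumes "\<tau> > 0" "r \<ge> 0" "\<sigma> > 0" "\<And>x. isCont g x" "\<And>x. \<bar>g x\<bar> \<le> B"
  shows "(\<lambda>n. integral\<^sup>L (mu_n r \<sigma> \<tau> n) g) \<longlonglongrightarrow> integral\<^sup>L (mu_lim r \<sigma> \<tau>) g"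
  by (rule weak_conv_imp_integral_bdd_continuous_conv[OF real_distr_mu_n real_distr_mu_lim weak_conv_mu[OF assms(1-3)]])
     (use assms in auto)

lemma exp_limit_real:
  fixes y :: "nat \<Rightarrow> real"
  assumes "y \<longlonglongrightarrow> w"
  shows "(\<lambda>n. (1 + y n / real n) ^ n) \<longlonglongrightarrow> exp w"
proof -
  have "(\<lambda>n. of_real (y n) :: complex) \<longlonglongrightarrow> of_real w"
    using assms by (simp only: tendsto_of_real_iff)
  from exp_limit_complex[OF this]
  have "(\<lambda>n. of_real ((1 + y n / real n) ^ n) :: complex) \<longlonglongrightarrow> of_real (exp w)"
    by (simp add: exp_of_real)
  then show ?thesis by (simp only: tendsto_of_real_iff)
qed

lemma exp_xx:
  assumes "j \<le> n"
  shows "exp (k * xx \<sigma> \<tau> n j) = exp (k * \<sigma> * sqrt (\<tau> / real n)) ^ j * exp (- (k * \<sigma> * sqrt (\<tau> / real n))) ^ (n - j)"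
proof -
  define \<theta> where "\<theta> = k * \<sigma> * sqrt (\<tau> / real n)"
  have e1: "exp \<theta> ^ j = exp (real j * \<theta>)" by (simp only: exp_of_nat_mult)
  have e2: "exp (- \<theta>) ^ (n - j) = exp (real (n - j) * (- \<theta>))" by (simp only: exp_of_nat_mult)
  have "exp \<theta> ^ j * exp (- \<theta>) ^ (n - j) = exp (real j * \<theta> + real (n - j) * (- \<theta>))"
    by (simp only: e1 e2 exp_add)
  also have "real j * \<theta> + real (n - j) * (- \<theta>) = k * xx \<sigma> \<tau> n j"
    using assms by (simp add: xx_def \<theta>_def of_nat_diff algebra_simps)
  finally show ?thesis by (simp add: \<theta>_def)
qed

lemma sum_binom:
  fixes p a b :: real
  shows "(\<Sum>j\<le>n. (real (n choose j) * p ^ j * (1 - p) ^ (n - j)) * (a ^ j * b ^ (n - j))) = (p * a + (1 - p) * b) ^ n"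
  by (subst binomial_ring) (simp add: atLeast0AtMost power_mult_distrib mult_ac)

lemma integral_exp_mu_n:
  "integral\<^sup>L (mu_n r \<sigma> \<tau> n) (\<lambda>x. exp (k * x)) =
    (pp r \<sigma> \<tau> n * exp (k * \<sigma> * sqrt (\<tau> / real n)) + (1 - pp r \<sigma> \<tau> n) * exp (- (k * \<sigma> * sqrt (\<tau> / real n)))) ^ n"
proof -
  have "integral\<^sup>L (mu_n r \<sigma> \<tau> n) (\<lambda>x. exp (k * x)) =
    (\<Sum>j\<le>n. (real (n choose j) * pp r \<sigma> \<tau> n ^ j * (1 - pp r \<sigma> \<tau> n) ^ (n - j)) *\<^sub>R exp (k * xx \<sigma> \<tau> n j))"
    by (rule integral_mu_n) simp
  also have "\<dots> = (\<Sum>j\<le>n. (real (n choose j) * pp r \<sigma> \<tau> n ^ j * (1 - pp r \<sigma> \<tau> n) ^ (n - j)) *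
       (exp (k * \<sigma> * sqrt (\<tau> / real n)) ^ j * exp (- (k * \<sigma> * sqrt (\<tau> / real n))) ^ (n - j)))"
    by (intro sum.cong refl) (simp add: exp_xx)
  also note sum_binom
  finally show ?thesis .
qed

lemma integral_mono_mu_n:
  fixes g h :: "real \<Rightarrow> real"
  assumes [measurable]: "g \<in> borel_measurable borel" "h \<in> borel_measurable borel" and le: "\<And>x. g x \<le> h x"
  shows "integral\<^sup>L (mu_n r \<sigma> \<tau> n) g \<le> integral\<^sup>L (mu_n r \<sigma> \<tau> n) h"
  unfolding integral_mu_n[OF assms(1)] integral_mu_n[OF assms(2)]
  using pp_range[of r \<sigma> \<tau> n] le by (auto intro!: sum_mono mult_left_mono)

lemma integral_diff_mu_n:
  fixes g h :: "real \<Rightarrow> real"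
  assumes [measurable]: "g \<in> borel_measurable borel" "h \<in> borel_measurable borel"
  shows "integral\<^sup>L (mu_n r \<sigma> \<tau> n) (\<lambda>x. g x - h x) = integral\<^sup>L (mu_n r \<sigma> \<tau> n) g - integral\<^sup>L (mu_n r \<sigma> \<tau> n) h"
proof -
  have m: "(\<lambda>x. g x - h x) \<in> borel_measurable borel" by measurable
  show ?thesis
  unfolding integral_mu_n[OF assms(1)] integral_mu_n[OF assms(2)] integral_mu_n[OF m]
  by (simp add: sum_subtractf algebra_simps)
qed

lemma integral_cmult_mu_n:
  fixes g :: "real \<Rightarrow> real"
  assumes [measurable]: "g \<in> borel_measurable borel"
  shows "integral\<^sup>L (mu_n r \<sigma> \<tau> n) (\<lambda>x. a * g x) = a * integral\<^sup>L (mu_n r \<sigma> \<tau> n) g"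
proof -
  have m: "(\<lambda>x. a * g x) \<in> borel_measurable borel" by measurable
  show ?thesis
  unfolding integral_mu_n[OF assms(1)] integral_mu_n[OF m]
  by (simp add: sum_distrib_left algebra_simps)
qed

lemma aux_first: fixes u d R :: real assumes "u - d > 0" shows "((R-d)/(u-d))*u + (1 - (R-d)/(u-d))*d = R"
proof -
  have gen: "\<And>q. q*u + (1-q)*d = d + q*(u-d)" by (simp add: algebra_simps)
  have "((R-d)/(u-d))*u + (1 - (R-d)/(u-d))*d = d + ((R-d)/(u-d))*(u-d)" by (rule gen)
  also have "\<dots> = R" using assms by simp
  finally show ?thesis .
qed

lemma first_moment:
  fixes \<tau> r \<sigma> :: real assumes "\<tau> > 0" "r \<ge> 0" "\<sigma> > 0"
  shows "eventually (\<lambda>n. integral\<^sup>L (mu_n r \<sigma> \<tau> n) (\<lambda>x. exp (1 * x)) = exp (r * \<tau>)) sequentially"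
  using ev_q[OF assms]
proof eventually_elim
  case (elim n)
  define s where "s = sqrt (\<tau> / real n)"
  have s: "s > 0" using elim assms by (simp add: s_def)
  have ud: "exp (\<sigma> * s) - exp (- \<sigma> * s) > 0" using s assms by simp
  have "pp r \<sigma> \<tau> n * exp (1 * \<sigma> * s) + (1 - pp r \<sigma> \<tau> n) * exp (- (1 * \<sigma> * s)) = exp (r * s^2)"
    using elim aux_first[OF ud] unfolding s_def[symmetric] QQ_def by simp
  also have "s^2 = \<tau> / real n" using assms by (simp add: s_def)
  finally have "integral\<^sup>L (mu_n r \<sigma> \<tau> n) (\<lambda>x. exp (1 * x)) = exp (r * (\<tau> / real n)) ^ n"
    unfolding integral_exp_mu_n s_def by simp
  also have "\<dots> = exp (real n * (r * (\<tau> / real n)))" by (simp only: exp_of_nat_mult)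
  also have "\<dots> = exp (r * \<tau>)" using elim by simp
  finally show ?case .
qed

lemma second_moment:
  fixes \<tau> r \<sigma> :: real assumes "\<tau> > 0" "r \<ge> 0" "\<sigma> > 0"
  shows "\<exists>K. eventually (\<lambda>n. integral\<^sup>L (mu_n r \<sigma> \<tau> n) (\<lambda>x. exp (2 * x)) \<le> K) sequentially"
proof -
  define y where "y n = real n * (QQ r \<sigma> (sqrt (\<tau> / real n)) * exp (\<sigma> * sqrt (\<tau> / real n))^2
          + (1 - QQ r \<sigma> (sqrt (\<tau> / real n))) * exp (- \<sigma> * sqrt (\<tau> / real n))^2 - 1)" for n
  have "y \<longlonglongrightarrow> \<tau> * (2 * r + \<sigma> * \<sigma>)" unfolding y_def by (rule seq_sq[OF assms])
  from exp_limit_real[OF this]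
  have lim: "(\<lambda>n. (1 + y n / real n) ^ n) \<longlonglongrightarrow> exp (\<tau> * (2 * r + \<sigma> * \<sigma>))" .
  have "eventually (\<lambda>n. (1 + y n / real n) ^ n < exp (\<tau> * (2 * r + \<sigma> * \<sigma>)) + 1) sequentially"
    using lim by (rule order_tendstoD) simp
  moreover have "eventually (\<lambda>n. integral\<^sup>L (mu_n r \<sigma> \<tau> n) (\<lambda>x. exp (2 * x)) = (1 + y n / real n) ^ n) sequentially"
    using ev_q[OF assms]
  proof eventually_elim
    case (elim n)
    have "exp (2 * \<sigma> * sqrt (\<tau> / real n)) = exp (\<sigma> * sqrt (\<tau> / real n))^2"
      by (simp add: exp_double[symmetric] mult.assoc)
    moreover have "exp (- (2 * \<sigma> * sqrt (\<tau> / real n))) = exp (- \<sigma> * sqrt (\<tau> / real n))^2"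
      by (simp add: exp_double[symmetric] mult.assoc)
    moreover have "1 + y n / real n = QQ r \<sigma> (sqrt (\<tau> / real n)) * exp (\<sigma> * sqrt (\<tau> / real n))^2
          + (1 - QQ r \<sigma> (sqrt (\<tau> / real n))) * exp (- \<sigma> * sqrt (\<tau> / real n))^2"
      using elim by (simp add: y_def)
    ultimately show ?case using elim unfolding integral_exp_mu_n by simp
  qed
  ultimately have "eventually (\<lambda>n. integral\<^sup>L (mu_n r \<sigma> \<tau> n) (\<lambda>x. exp (2 * x)) \<le> exp (\<tau> * (2 * r + \<sigma> * \<sigma>)) + 1) sequentially"
    by eventually_elim simp
  then show ?thesis by blast
qed

lemma aux_trunc: fixes A B m :: real assumes "0 \<le> A" "A \<le> B" "m > 0"
  shows "A - min A m \<le> B^2 / m"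
proof (cases "A \<le> m")
  case True then show ?thesis using assms by simp
next
  case False
  then have "A - min A m \<le> A" using assms by simp
  also have "A \<le> A * A / m" using False assms by (simp add: field_simps mult_right_mono)
  also have "A * A \<le> B * B" using assms by (intro mult_mono) auto
  then have "A * A / m \<le> B^2 / m" using assms by (simp add: power2_eq_square divide_right_mono)
  finally show ?thesis .
qed

lemma crr_eq:
  fixes \<tau> r \<sigma> Z0 :: real and f :: "real \<Rightarrow> real"
  assumes "\<tau> > 0" "n > 0" "pp r \<sigma> \<tau> n = QQ r \<sigma> (sqrt (\<tau> / real n))"
    and m: "(\<lambda>x. f (Z0 * exp x)) \<in> borel_measurable borel"
  shows "crr_price r \<sigma> Z0 f n \<tau> = exp (- r * \<tau>) * integral\<^sup>L (mu_n r \<sigma> \<tau> n) (\<lambda>x. f (Z0 * exp x))"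
proof -
  define s where "s = sqrt (\<tau> / real n)"
  have s2: "s^2 = \<tau> / real n" using assms by (simp add: s_def)
  have q_eq: "(exp (r * \<tau> / real n) - 1 / exp (\<sigma> * s)) / (exp (\<sigma> * s) - 1 / exp (\<sigma> * s)) = pp r \<sigma> \<tau> n"
    using assms(3) unfolding s_def[symmetric] QQ_def s2 by (simp add: exp_minus inverse_eq_divide)
  have "exp (r * \<tau> / real n) ^ n = exp (real n * (r * \<tau> / real n))" by (simp only: exp_of_nat_mult)
  also have "\<dots> = exp (r * \<tau>)" using assms by simp
  finally have R_eq: "1 / exp (r * \<tau> / real n) ^ n = exp (- r * \<tau>)" by (simp add: exp_minus inverse_eq_divide)
  have pt: "Z0 * exp (\<sigma> * s) ^ j * (1 / exp (\<sigma> * s)) ^ (n - j) = Z0 * exp (xx \<sigma> \<tau> n j)" if "j \<le> n" for j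
    using exp_xx[OF that, of 1 \<sigma> \<tau>] unfolding s_def[symmetric] by (simp add: exp_minus inverse_eq_divide)
  have "crr_price r \<sigma> Z0 f n \<tau> = exp (- r * \<tau>) * (\<Sum>j=0..n. real (n choose j) * pp r \<sigma> \<tau> n ^ j * (1 - pp r \<sigma> \<tau> n) ^ (n - j)
       * f (Z0 * exp (\<sigma> * s) ^ j * (1 / exp (\<sigma> * s)) ^ (n - j)))"
    unfolding crr_price_def Let_def s_def[symmetric] q_eq R_eq ..
  also have "\<dots> = exp (- r * \<tau>) * integral\<^sup>L (mu_n r \<sigma> \<tau> n) (\<lambda>x. f (Z0 * exp x))"
    unfolding integral_mu_n[OF m]
    by (intro arg_cong2[where f="(*)"] refl sum.cong) (auto simp: atLeast0AtMost pt)
  finally show ?thesis .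
qed

lemma bs_eq:
  fixes \<tau> r \<sigma> Z0 :: real and f :: "real \<Rightarrow> real"
  assumes m: "(\<lambda>x. f (Z0 * exp x)) \<in> borel_measurable borel"
  shows "bs_price r \<sigma> Z0 f \<tau> = exp (- r * \<tau>) * integral\<^sup>L (mu_lim r \<sigma> \<tau>) (\<lambda>x. f (Z0 * exp x))"
  unfolding bs_price_def mu_lim_def using m by (subst integral_distr) auto

lemma main_lim:
  fixes \<tau> r \<sigma> Z0 c :: real and f :: "real \<Rightarrow> real"
  assumes "\<tau> > 0" "r \<ge> 0" "\<sigma> > 0" "Z0 > 0" "c > 0"
    and fc: "continuous_on {0..} f" and fnn: "\<forall>x\<ge>0. f x \<ge> 0" and fle: "\<forall>x\<ge>0. f x \<le> c * \<bar>x\<bar>"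
  shows "(\<lambda>n. crr_price r \<sigma> Z0 f n \<tau>) \<longlonglongrightarrow> bs_price r \<sigma> Z0 f \<tau>"
proof -
  define F where "F x = f (Z0 * exp x)" for x
  have "continuous_on UNIV F"
    unfolding F_def
    by (rule continuous_on_compose2[OF fc, of UNIV "\<lambda>x. Z0 * exp x"])
       (use \<open>Z0 > 0\<close> in \<open>auto intro!: continuous_intros simp: less_imp_le\<close>)
  then have Fcont: "\<And>x. isCont F x"
    by (simp add: continuous_on_eq_continuous_at)
  have Fm[measurable]: "F \<in> borel_measurable borel"
    by (rule borel_measurable_continuous_onI) fact
  have F0: "0 \<le> F x" for x using fnn \<open>Z0 > 0\<close> by (simp add: F_def less_imp_le)
  have Fle: "F x \<le> c * Z0 * exp x" for x using fle \<open>Z0 > 0\<close> by (simp add: F_def less_imp_le mult.assoc)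
  define Fm where "Fm m x = min (F x) (real m)" for m :: nat and x
  have Fm_meas[measurable]: "Fm m \<in> borel_measurable borel" for m unfolding Fm_def by measurable
  have Fm_cont: "isCont (Fm m) x" for m x unfolding Fm_def by (intro continuous_intros Fcont)
  have Fm_bdd: "\<bar>Fm m x\<bar> \<le> real m" for m x using F0[of x] by (simp add: Fm_def)
  have Fm_le: "Fm m x \<le> F x" for m x by (simp add: Fm_def)
  have b_lim: "(\<lambda>n. integral\<^sup>L (mu_n r \<sigma> \<tau> n) (Fm m)) \<longlonglongrightarrow> integral\<^sup>L (mu_lim r \<sigma> \<tau>) (Fm m)" for m
    using assms(1-3) Fm_cont Fm_bdd by (rule integral_conv_bdd)
  obtain K where K: "eventually (\<lambda>n. integral\<^sup>L (mu_n r \<sigma> \<tau> n) (\<lambda>x. exp (2 * x)) \<le> K) sequentially"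
    using second_moment[OF assms(1-3)] by blast
  have bound1: "eventually (\<lambda>n. integral\<^sup>L (mu_n r \<sigma> \<tau> n) F \<le> c * Z0 * exp (r * \<tau>)) sequentially"
    using first_moment[OF assms(1-3)]
  proof eventually_elim
    case (elim n)
    have "integral\<^sup>L (mu_n r \<sigma> \<tau> n) F \<le> integral\<^sup>L (mu_n r \<sigma> \<tau> n) (\<lambda>x. (c * Z0) * exp (1 * x))"
      by (rule integral_mono_mu_n) (auto simp: Fle)
    also have "\<dots> = c * Z0 * exp (r * \<tau>)"
      using elim by (subst integral_cmult_mu_n) auto
    finally show ?case .
  qed
  have bound2: "eventually (\<lambda>n. integral\<^sup>L (mu_n r \<sigma> \<tau> n) F - integral\<^sup>L (mu_n r \<sigma> \<tau> n) (Fm m) \<le> (c * Z0)^2 / real m * K) sequentially"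
    if "m > 0" for m
    using K
  proof eventually_elim
    case (elim n)
    have "integral\<^sup>L (mu_n r \<sigma> \<tau> n) F - integral\<^sup>L (mu_n r \<sigma> \<tau> n) (Fm m) = integral\<^sup>L (mu_n r \<sigma> \<tau> n) (\<lambda>x. F x - Fm m x)"
      by (rule integral_diff_mu_n[symmetric]) auto
    also have "\<dots> \<le> integral\<^sup>L (mu_n r \<sigma> \<tau> n) (\<lambda>x. (c * Z0)^2 / real m * exp (2 * x))"
    proof (rule integral_mono_mu_n)
      fix x
      have "F x - Fm m x \<le> (c * Z0 * exp x)^2 / real m"
        unfolding Fm_def using F0[of x] Fle[of x] that by (intro aux_trunc) auto
      also have "\<dots> = (c * Z0)^2 / real m * exp (2 * x)"
        by (simp add: power_mult_distrib exp_double[symmetric])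
      finally show "F x - Fm m x \<le> (c * Z0)^2 / real m * exp (2 * x)" .
    qed auto
    also have "\<dots> = (c * Z0)^2 / real m * integral\<^sup>L (mu_n r \<sigma> \<tau> n) (\<lambda>x. exp (2 * x))"
      by (rule integral_cmult_mu_n) auto
    also have "\<dots> \<le> (c * Z0)^2 / real m * K"
      using elim by (intro mult_left_mono) auto
    finally show ?case .
  qed
  interpret L: real_distribution "mu_lim r \<sigma> \<tau>" by (rule real_distr_mu_lim)
  have Fm_int: "integrable (mu_lim r \<sigma> \<tau>) (Fm m)" for m
    by (rule L.integrable_const_bound[where B="real m"]) (auto simp: Fm_bdd)
  define \<beta> where "\<beta> m = integral\<^sup>L (mu_lim r \<sigma> \<tau>) (Fm m)" for m
  have "incseq \<beta>"
    unfolding incseq_def \<beta>_def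
    by (auto intro!: integral_mono Fm_int simp: Fm_def)
  moreover have "\<beta> m \<le> c * Z0 * exp (r * \<tau>)" for m
  proof -
    have "eventually (\<lambda>n. integral\<^sup>L (mu_n r \<sigma> \<tau> n) (Fm m) \<le> c * Z0 * exp (r * \<tau>)) sequentially"
      using bound1
    proof eventually_elim
      case (elim n)
      have "integral\<^sup>L (mu_n r \<sigma> \<tau> n) (Fm m) \<le> integral\<^sup>L (mu_n r \<sigma> \<tau> n) F"
        by (rule integral_mono_mu_n) (auto simp: Fm_le)
      then show ?case using elim by simp
    qed
    then show ?thesis unfolding \<beta>_def using b_lim[of m]
      by (intro LIMSEQ_le_const2) (auto simp: eventually_sequentially)
  qed
  ultimately obtain Lim where Lim: "\<beta> \<longlonglongrightarrow> Lim"
    using incseq_convergent by blast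
  have Fpt: "(\<lambda>m. Fm m x) \<longlonglongrightarrow> F x" for x
  proof -
    have "eventually (\<lambda>m. Fm m x = F x) sequentially"
      using eventually_ge_at_top[of "nat \<lceil>F x\<rceil>"]
      by eventually_elim (auto simp: Fm_def intro!: min_absorb1 order_trans[OF real_nat_ceiling_ge])
    then show ?thesis by (rule tendsto_eventually)
  qed
  have monoF: "AE x in mu_lim r \<sigma> \<tau>. mono (\<lambda>m. Fm m x)"
    by (intro AE_I2) (auto simp: mono_def Fm_def intro!: min.mono)
  have Fint: "integrable (mu_lim r \<sigma> \<tau>) F" and FL: "integral\<^sup>L (mu_lim r \<sigma> \<tau>) F = Lim"
    using Lim unfolding \<beta>_def
    by (auto intro!: integrable_monotone_convergence[where f=Fm] integral_monotone_convergence[where f=Fm]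
      Fm_int Fpt monoF)
  have conv: "(\<lambda>n. integral\<^sup>L (mu_n r \<sigma> \<tau> n) F) \<longlonglongrightarrow> Lim"
    unfolding LIMSEQ_iff
  proof (intro allI impI)
    fix \<epsilon> :: real assume "\<epsilon> > 0"
    have e3: "\<epsilon> / 3 > 0" using \<open>\<epsilon> > 0\<close> by simp
    have "eventually (\<lambda>m. dist (\<beta> m) Lim < \<epsilon> / 3) sequentially"
      using Lim e3 by (rule tendstoD)
    then have "eventually (\<lambda>m. \<bar>\<beta> m - Lim\<bar> < \<epsilon> / 3) sequentially"
      by (simp only: dist_real_def)
    moreover have "eventually (\<lambda>m. (c * Z0)^2 * \<bar>K\<bar> / real m < \<epsilon> / 3) sequentially"
    proof -
      have "(\<lambda>m. (c * Z0)^2 * \<bar>K\<bar> / real m) \<longlonglongrightarrow> 0"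
        by (intro tendsto_divide_0[OF tendsto_const] filterlim_at_top_imp_at_infinity[OF filterlim_real_sequentially])
      then show ?thesis by (rule order_tendstoD(2)) (simp add: e3 \<open>\<epsilon> > 0\<close>)
    qed
    moreover have "eventually (\<lambda>m. m > 0) sequentially" by (rule eventually_gt_at_top)
    ultimately have evm: "eventually (\<lambda>m. \<bar>\<beta> m - Lim\<bar> < \<epsilon> / 3 \<and> (c * Z0)^2 * \<bar>K\<bar> / real m < \<epsilon> / 3 \<and> m > 0) sequentially"
      by eventually_elim auto
    then obtain m where m: "\<bar>\<beta> m - Lim\<bar> < \<epsilon> / 3" "(c * Z0)^2 * \<bar>K\<bar> / real m < \<epsilon> / 3" "m > 0"
      using eventually_happens'[OF sequentially_bot evm] by blast
    have "eventually (\<lambda>n. dist (integral\<^sup>L (mu_n r \<sigma> \<tau> n) (Fm m)) (\<beta> m) < \<epsilon> / 3) sequentially"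
      using b_lim[of m] e3 unfolding \<beta>_def by (rule tendstoD)
    then have "eventually (\<lambda>n. \<bar>integral\<^sup>L (mu_n r \<sigma> \<tau> n) (Fm m) - \<beta> m\<bar> < \<epsilon> / 3) sequentially"
      by (simp only: dist_real_def)
    then have "eventually (\<lambda>n. norm (integral\<^sup>L (mu_n r \<sigma> \<tau> n) F - Lim) < \<epsilon>) sequentially"
      using bound2[OF m(3)]
    proof eventually_elim
      case (elim n)
      have nn: "0 \<le> integral\<^sup>L (mu_n r \<sigma> \<tau> n) F - integral\<^sup>L (mu_n r \<sigma> \<tau> n) (Fm m)"
        using integral_mono_mu_n[of "Fm m" F r \<sigma> \<tau> n] Fm_le by auto
      have "(c * Z0)^2 / real m * K \<le> (c * Z0)^2 / real m * \<bar>K\<bar>"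
        by (intro mult_left_mono) auto
      then have "(c * Z0)^2 / real m * K \<le> (c * Z0)^2 * \<bar>K\<bar> / real m" by simp
      then show ?case unfolding real_norm_def using elim m nn by linarith
    qed
    then show "\<exists>no. \<forall>n\<ge>no. norm (integral\<^sup>L (mu_n r \<sigma> \<tau> n) F - Lim) < \<epsilon>"
      by (simp add: eventually_sequentially)
  qed
  have "(\<lambda>n. exp (- r * \<tau>) * integral\<^sup>L (mu_n r \<sigma> \<tau> n) F) \<longlonglongrightarrow> exp (- r * \<tau>) * integral\<^sup>L (mu_lim r \<sigma> \<tau>) F"
    unfolding FL by (intro tendsto_mult tendsto_const conv)
  moreover have "eventually (\<lambda>n. exp (- r * \<tau>) * integral\<^sup>L (mu_n r \<sigma> \<tau> n) F = crr_price r \<sigma> Z0 f n \<tau>) sequentially"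
    using ev_q[OF assms(1-3)]
  proof eventually_elim
    case (elim n)
    show ?case using crr_eq[OF assms(1), of n r \<sigma> f Z0] elim Fm unfolding F_def by simp
  qed
  ultimately have "(\<lambda>n. crr_price r \<sigma> Z0 f n \<tau>) \<longlonglongrightarrow> exp (- r * \<tau>) * integral\<^sup>L (mu_lim r \<sigma> \<tau>) F"
    by (rule Lim_transform_eventually)
  then show ?thesis using bs_eq[of f Z0 r \<sigma> \<tau>] Fm unfolding F_def by simp
qed

lemma sum_binom2:
  fixes a b x y :: real
  shows "(\<Sum>j=0..n. real (n choose j) * a ^ j * b ^ (n - j) * (x ^ j * y ^ (n - j))) = (a * x + b * y) ^ n"
  by (subst binomial_ring) (simp add: power_mult_distrib mult_ac atLeast0AtMost)

lemma ratio_bound: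
  fixes q u d R s \<sigma> r :: real
  assumes u: "u = exp (\<sigma> * s)" and d: "d = 1 / u" and q: "q = (R - d) / (u - d)"
    and s: "s > 0" and \<sigma>: "\<sigma> > 0" and R: "R > 0" and q1: "q > 1" and rs: "\<sigma> < r * s"
  shows "(q * u + (q - 1) * d) / R \<le> 1 + r / \<sigma>^2"
proof -
  have u1: "u > 1" using u s \<sigma> by simp
  have d0: "d > 0" using d u1 by simp
  have "d < 1" using u1 d by simp
  then have ud: "u - d > 0" using u1 by simp
  have gen: "\<And>q. q*u + (1-q)*d = d + q*(u-d)" by (simp add: algebra_simps)
  have g1: "q*u + (1-q)*d = d + q*(u-d)" by (rule gen)
  have g2: "q*(u-d) = R - d" using ud unfolding q by simp
  from g1 g2 have lin: "q*u + (1-q)*d = R" by simp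
  have eq1: "q * u + (q - 1) * d = R + 2 * ((q - 1) * d)" using lin by (simp add: algebra_simps)
  have "q - 1 = (R - u) / (u - d)" using q ud by (simp add: field_simps)
  then have "(q - 1) * d = (R - u) * d / (u - d)" by simp
  also have "\<dots> \<le> R * d / (u - d)" using ud d0 u1 by (intro divide_right_mono mult_right_mono) auto
  also have "R * d / (u - d) = R / (u^2 - 1)"
  proof -
    have "u * u - 1 > 0" using u1 by (metis less_1_mult less_iff_diff_less_0 diff_gt_0_iff_gt)
    then show ?thesis unfolding d using u1 by (simp add: field_simps power2_eq_square)
  qed
  finally have b1: "(q - 1) * d \<le> R / (u^2 - 1)" .
  have "u^2 = exp (2 * (\<sigma> * s))" using u by (simp add: exp_double[symmetric])
  then have "u^2 - 1 \<ge> 2 * (\<sigma> * s)" using exp_ge_add_one_self[of "2 * (\<sigma> * s)"] by linarith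
  moreover have ss: "\<sigma> * s > 0" using s \<sigma> by simp
  ultimately have pos: "u^2 - 1 > 0" by linarith
  have "R / (u^2 - 1) \<le> R / (2 * (\<sigma> * s))"
    using \<open>u^2 - 1 \<ge> 2 * (\<sigma> * s)\<close> R ss pos by (intro divide_left_mono) (auto intro: mult_pos_pos)
  with b1 have b2: "2 * ((q - 1) * d) \<le> R / (\<sigma> * s)" by simp
  have "1 / (\<sigma> * s) \<le> r / \<sigma>^2"
    using rs s \<sigma> by (simp add: field_simps power2_eq_square mult_left_mono)
  then have "R / (\<sigma> * s) \<le> R * (r / \<sigma>^2)"
    using R by (metis divide_inverse inverse_eq_divide mult_left_mono less_imp_le mult_1)
  with b2 eq1 have "q * u + (q - 1) * d \<le> R * (1 + r / \<sigma>^2)" by (simp add: algebra_simps)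
  then show ?thesis using R by (simp add: divide_le_eq mult.commute)
qed

lemma crr_bound:
  fixes \<tau> r \<sigma> Z0 c :: real and f :: "real \<Rightarrow> real" and n :: nat
  assumes "\<tau> > 0" "n > 0" "r \<ge> 0" "\<sigma> > 0" "Z0 > 0" "c > 0"
    and fnn: "\<forall>x\<ge>0. f x \<ge> 0" and fle: "\<forall>x\<ge>0. f x \<le> c * \<bar>x\<bar>"
  shows "\<bar>crr_price r \<sigma> Z0 f n \<tau>\<bar> \<le> c * Z0 * exp (r^3 / \<sigma>^4 * \<tau>)"
proof -
  define s where "s = sqrt (\<tau> / real n)"
  define u where "u = exp (\<sigma> * s)"
  define d where "d = 1 / u"
  define R where "R = exp (r * \<tau> / real n)"
  define q where "q = (R - d) / (u - d)"
  have s: "s > 0" using assms by (simp add: s_def)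
  have s2: "s^2 = \<tau> / real n" using assms by (simp add: s_def)
  have u1: "u > 1" using s assms by (simp add: u_def)
  have d0: "d > 0" "d < 1" using u1 by (auto simp: d_def)
  have ud: "u - d > 0" using u1 d0 by simp
  have R1: "R \<ge> 1" using assms by (simp add: R_def)
  have q0: "q \<ge> 0" using R1 d0 ud by (simp add: q_def)
  have crr: "crr_price r \<sigma> Z0 f n \<tau> = (1 / R ^ n) * (\<Sum>j=0..n. real (n choose j) * q ^ j * (1 - q) ^ (n - j) * f (Z0 * u ^ j * d ^ (n - j)))"
    unfolding crr_price_def Let_def s_def[symmetric] u_def[symmetric] d_def[symmetric] R_def[symmetric] q_def[symmetric] ..
  have "\<bar>\<Sum>j=0..n. real (n choose j) * q ^ j * (1 - q) ^ (n - j) * f (Z0 * u ^ j * d ^ (n - j))\<bar>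
      \<le> (\<Sum>j=0..n. \<bar>real (n choose j) * q ^ j * (1 - q) ^ (n - j) * f (Z0 * u ^ j * d ^ (n - j))\<bar>)"
    by (rule sum_abs)
  also have "\<dots> \<le> (\<Sum>j=0..n. real (n choose j) * q ^ j * \<bar>1 - q\<bar> ^ (n - j) * (c * Z0 * (u ^ j * d ^ (n - j))))"
  proof (rule sum_mono)
    fix j
    have y: "Z0 * u ^ j * d ^ (n - j) > 0" using assms u1 d0 by simp
    then have "\<bar>f (Z0 * u ^ j * d ^ (n - j))\<bar> \<le> c * Z0 * (u ^ j * d ^ (n - j))"
      using fnn fle by (simp add: mult.assoc)
    then show "\<bar>real (n choose j) * q ^ j * (1 - q) ^ (n - j) * f (Z0 * u ^ j * d ^ (n - j))\<bar>
       \<le> real (n choose j) * q ^ j * \<bar>1 - q\<bar> ^ (n - j) * (c * Z0 * (u ^ j * d ^ (n - j)))"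
      using q0 by (simp add: abs_mult power_abs mult_left_mono)
  qed
  also have "\<dots> = c * Z0 * (\<Sum>j=0..n. real (n choose j) * q ^ j * \<bar>1 - q\<bar> ^ (n - j) * (u ^ j * d ^ (n - j)))"
    by (simp add: sum_distrib_left mult_ac)
  also have "\<dots> = c * Z0 * (q * u + \<bar>1 - q\<bar> * d) ^ n"
    by (simp only: sum_binom2)
  finally have sb: "\<bar>\<Sum>j=0..n. real (n choose j) * q ^ j * (1 - q) ^ (n - j) * f (Z0 * u ^ j * d ^ (n - j))\<bar>
      \<le> c * Z0 * (q * u + \<bar>1 - q\<bar> * d) ^ n" .
  have Rn: "R ^ n > 0" using R1 by simp
  have "\<bar>crr_price r \<sigma> Z0 f n \<tau>\<bar> \<le> c * Z0 * (q * u + \<bar>1 - q\<bar> * d) ^ n / R ^ n"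
    unfolding crr using sb Rn by (simp add: abs_mult divide_right_mono)
  also have "\<dots> = c * Z0 * ((q * u + \<bar>1 - q\<bar> * d) / R) ^ n"
    by (simp add: power_divide)
  also have "\<dots> \<le> c * Z0 * exp (r^3 / \<sigma>^4 * \<tau>)"
  proof -
    have base_nn: "0 \<le> (q * u + \<bar>1 - q\<bar> * d) / R" using q0 u1 d0 R1 by simp
    have "((q * u + \<bar>1 - q\<bar> * d) / R) ^ n \<le> exp (r^3 / \<sigma>^4 * \<tau>)"
    proof (cases "q \<le> 1")
      case True
      have gen: "\<And>q. q*u + (1-q)*d = d + q*(u-d)" by (simp add: algebra_simps)
      have g2: "q*(u-d) = R - d" using ud unfolding q_def by simp
      have "q * u + \<bar>1 - q\<bar> * d = R" using True gen[of q] g2 by simp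
      then have "((q * u + \<bar>1 - q\<bar> * d) / R) ^ n = 1" using R1 by simp
      also have "1 \<le> exp (r^3 / \<sigma>^4 * \<tau>)" using assms by simp
      finally show ?thesis .
    next
      case False
      then have q1: "q > 1" by simp
      have "R - d > u - d" using q1 ud unfolding q_def by (simp add: divide_less_eq_1 less_divide_eq_1)
      then have "exp (r * \<tau> / real n) > exp (\<sigma> * s)" by (simp add: R_def u_def)
      then have "r * s^2 > \<sigma> * s" unfolding s2 by simp
      then have rs: "\<sigma> < r * s" using s by (simp add: power2_eq_square)
      then have r0: "r > 0" using s assms by (metis mult_eq_0_iff less_eq_real_def mult_pos_pos not_less zero_less_mult_pos2 order_less_trans)
      have "(q * u + (q - 1) * d) / R \<le> 1 + r / \<sigma>^2"
        by (rule ratio_bound[OF u_def d_def q_def s assms(4) _ q1 rs]) (use R1 in simp)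
      moreover have "\<bar>1 - q\<bar> = q - 1" using q1 by simp
      ultimately have "(q * u + \<bar>1 - q\<bar> * d) / R \<le> 1 + r / \<sigma>^2" by simp
      moreover have "1 + r / \<sigma>^2 \<le> exp (r / \<sigma>^2)" by (rule exp_ge_add_one_self)
      ultimately have "(q * u + \<bar>1 - q\<bar> * d) / R \<le> exp (r / \<sigma>^2)" by linarith
      then have "((q * u + \<bar>1 - q\<bar> * d) / R) ^ n \<le> exp (r / \<sigma>^2) ^ n"
        using base_nn by (intro power_mono) auto
      also have "\<dots> = exp (real n * (r / \<sigma>^2))" by (simp only: exp_of_nat_mult)
      also have "real n * (r / \<sigma>^2) \<le> r^3 / \<sigma>^4 * \<tau>"
      proof -
        have "\<sigma>^2 < (r * s)^2" using rs assms by (intro power_strict_mono) auto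
        then have "\<sigma>^2 < r^2 * (\<tau> / real n)" by (simp add: power_mult_distrib s2)
        then have "real n * \<sigma>^2 < r^2 * \<tau>" using assms by (simp add: field_simps)
        then have "real n * \<sigma>^2 * (r / \<sigma>^4) \<le> r^2 * \<tau> * (r / \<sigma>^4)"
          using r0 assms by (intro mult_right_mono) auto
        then show ?thesis using assms by (simp add: field_simps power_def)
      qed
      then have "exp (real n * (r / \<sigma>^2)) \<le> exp (r^3 / \<sigma>^4 * \<tau>)" by simp
      finally show ?thesis .
    qed
    then show ?thesis using assms by (intro mult_left_mono) auto
  qed
  finally show ?thesis .
qed

lemma levy_AE_pos:
  assumes "levy_measure \<nu>"
  shows "AE x in \<nu>. x > 0"
proof (rule AE_I'[of "{..0}"])
  have s[measurable_cong]: "sets \<nu> = sets borel" using assms by (simp add: levy_measure_def)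
  show "{..0::real} \<in> null_sets \<nu>"
    using assms s by (auto simp: levy_measure_def null_sets_def)
  show "{x \<in> space \<nu>. \<not> 0 < x} \<subseteq> {..0}" by auto
qed

lemma levy_finite_tail:
  assumes "levy_measure \<nu>" "0 < \<epsilon>" "\<epsilon> \<le> 1"
  shows "emeasure \<nu> {\<epsilon><..} < \<infinity>"
proof -
  have s[measurable_cong]: "sets \<nu> = sets borel" using assms by (simp add: levy_measure_def)
  have fin: "(\<integral>\<^sup>+ x. ennreal (min 1 x) \<partial>\<nu>) < \<infinity>" using assms by (simp add: levy_measure_def)
  have m_eq: "borel_measurable \<nu> = borel_measurable borel" by (rule measurable_cong_sets[OF s refl])
  have "emeasure \<nu> {\<epsilon><..} = (\<integral>\<^sup>+ x. indicator {\<epsilon><..} x \<partial>\<nu>)"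
    by (rule nn_integral_indicator[symmetric]) (simp add: s)
  also have "\<dots> \<le> (\<integral>\<^sup>+ x. ennreal (1 / \<epsilon>) * ennreal (min 1 x) \<partial>\<nu>)"
  proof (rule nn_integral_mono)
    fix x
    show "indicator {\<epsilon><..} x \<le> ennreal (1 / \<epsilon>) * ennreal (min 1 x)"
    proof (cases "x > \<epsilon>")
      case True
      then have "\<epsilon> \<le> min 1 x" using assms by simp
      then have "1 \<le> 1 / \<epsilon> * min 1 x" using assms by (simp add: field_simps)
      then have "ennreal 1 \<le> ennreal (1 / \<epsilon> * min 1 x)" by (rule ennreal_leI)
      also have "\<dots> = ennreal (1 / \<epsilon>) * ennreal (min 1 x)"
        using True assms by (intro ennreal_mult) auto
      finally show ?thesis using True by simp
    qed simp
  qed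
  also have "\<dots> = ennreal (1 / \<epsilon>) * (\<integral>\<^sup>+ x. ennreal (min 1 x) \<partial>\<nu>)"
    by (intro nn_integral_cmult) measurable
  also have "\<dots> < \<infinity>" using fin by (simp add: ennreal_mult_less_top)
  finally show ?thesis .
qed

lemma psi_large:
  assumes lv: "levy_measure \<nu>"
  shows "\<exists>u\<ge>0. laplace_exponent \<nu> u \<ge> A"
proof -
  have s[measurable_cong]: "sets \<nu> = sets borel" using lv by (simp add: levy_measure_def)
  have m_eq: "borel_measurable \<nu> = borel_measurable borel" by (rule measurable_cong_sets[OF s refl])
  have inf: "emeasure \<nu> {0<..} = \<infinity>" using lv by (simp add: levy_measure_def)
  define Ak where "Ak m = {1 / real (Suc m) <..}" for m
  have le: "1 / real (Suc n) \<le> 1 / real (Suc m)" if "m \<le> n" for m n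
    using that by (intro divide_left_mono) auto
  have incA: "incseq Ak"
    unfolding incseq_def Ak_def
  proof (intro allI impI subsetI)
    fix m n x assume "m \<le> n" "x \<in> {1 / real (Suc m)<..}"
    then show "x \<in> {1 / real (Suc n)<..}" using le[of m n] by simp
  qed
  have rA: "range Ak \<subseteq> sets \<nu>" unfolding s Ak_def by (auto intro: borel_open)
  have "(SUP m. emeasure \<nu> (Ak m)) = emeasure \<nu> (\<Union>m. Ak m)"
    by (rule SUP_emeasure_incseq[OF rA incA])
  also have "(\<Union>m. Ak m) = {0<..}"
  proof (intro set_eqI iffI)
    fix x assume "x \<in> (\<Union>m. Ak m)"
    then obtain m where "x > 1 / real (Suc m)" by (auto simp: Ak_def)
    moreover have "1 / real (Suc m) > 0" by simp
    ultimately have "x > 0" by linarith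
    then show "x \<in> {0<..}" by simp
  next
    fix x :: real assume "x \<in> {0<..}"
    then have "x > 0" by simp
    then obtain m where "inverse (real (Suc m)) < x"
      using reals_Archimedean by blast
    then have "x \<in> Ak m" by (simp add: Ak_def inverse_eq_divide)
    then show "x \<in> (\<Union>m. Ak m)" by blast
  qed
  finally have sinf: "(SUP m. emeasure \<nu> (Ak m)) = \<infinity>" using inf by simp
  have "ennreal (2 * max A 0) < (SUP m. emeasure \<nu> (Ak m))" unfolding sinf by simp
  then obtain m where m: "ennreal (2 * max A 0) < emeasure \<nu> (Ak m)"
    by (auto simp: less_SUP_iff)
  define \<epsilon> where "\<epsilon> = 1 / real (Suc m)"
  have e: "0 < \<epsilon>" "\<epsilon> \<le> 1" by (auto simp: \<epsilon>_def)
  have fin: "emeasure \<nu> {\<epsilon><..} < \<infinity>" by (rule levy_finite_tail[OF lv e])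
  define L where "L = measure \<nu> {\<epsilon><..}"
  have eL: "emeasure \<nu> {\<epsilon><..} = ennreal L"
    unfolding L_def using fin by (intro emeasure_eq_ennreal_measure) simp
  have L: "L > 2 * max A 0"
    using m eL unfolding Ak_def \<epsilon>_def[symmetric] by (simp add: ennreal_less_iff)
  define u where "u = 1 / \<epsilon>"
  have u: "u \<ge> 0" using e by (simp add: u_def)
  have AEpos: "AE x in \<nu>. x > 0" by (rule levy_AE_pos[OF lv])
  have int_min: "integrable \<nu> (\<lambda>x. min 1 x)"
  proof (rule integrableI_nonneg)
    show "(\<lambda>x. min 1 x) \<in> borel_measurable \<nu>" by measurable
    show "AE x in \<nu>. 0 \<le> min 1 x" using AEpos by eventually_elim simp
    show "(\<integral>\<^sup>+ x. ennreal (min 1 x) \<partial>\<nu>) < \<infinity>" using lv by (simp add: levy_measure_def)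
  qed
  have int_g: "integrable \<nu> (\<lambda>x. 1 - exp (- u * x))"
  proof (rule Bochner_Integration.integrable_bound[OF integrable_mult_right[OF int_min, of "max 1 u"]])
    show "(\<lambda>x. 1 - exp (- u * x)) \<in> borel_measurable \<nu>" by measurable
    show "AE x in \<nu>. norm (1 - exp (- u * x)) \<le> norm (max 1 u * min 1 x)"
      using AEpos
    proof eventually_elim
      case (elim x)
      have e1: "exp (- u * x) \<le> 1" using elim u by simp
      have e2: "1 - u * x \<le> exp (- u * x)" using exp_ge_add_one_self[of "- u * x"] by simp
      have "1 - exp (- u * x) \<le> max 1 u * min 1 x"
      proof (cases "x \<le> 1")
        case True
        have "1 - exp (- u * x) \<le> u * x" using e2 by simp
        also have "\<dots> \<le> max 1 u * x" using elim by (intro mult_right_mono) auto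
        finally show ?thesis using True by simp
      next
        case False
        have "1 - exp (- u * x) \<le> 1" using elim u by simp
        also have "\<dots> \<le> max 1 u" by simp
        finally show ?thesis using False by simp
      qed
      then show ?case using e1 elim by simp
    qed
  qed
  have "(1 - exp (- u * \<epsilon>)) * L = integral\<^sup>L \<nu> (\<lambda>x. (1 - exp (- u * \<epsilon>)) * indicator {\<epsilon><..} x)"
    using sets.sets_into_space[of "{\<epsilon><..}" \<nu>] s by (simp add: L_def Int_absorb2)
  also have "\<dots> \<le> integral\<^sup>L \<nu> (\<lambda>x. 1 - exp (- u * x))"
  proof (rule integral_mono_AE)
    show "integrable \<nu> (\<lambda>x. (1 - exp (- u * \<epsilon>)) * indicator {\<epsilon><..} x)"
      using s fin by (intro integrable_mult_right integrable_real_indicator) auto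
    show "integrable \<nu> (\<lambda>x. 1 - exp (- u * x))" by (rule int_g)
    show "AE x in \<nu>. (1 - exp (- u * \<epsilon>)) * indicator {\<epsilon><..} x \<le> 1 - exp (- u * x)"
      using AEpos
    proof eventually_elim
      case (elim x)
      show ?case
      proof (cases "x > \<epsilon>")
        case True
        then have "exp (- u * x) \<le> exp (- u * \<epsilon>)" using u by (simp add: mult_left_mono)
        then show ?thesis using True by simp
      next
        case False
        then show ?thesis using elim u by simp
      qed
    qed
  qed
  finally have psi: "(1 - exp (- u * \<epsilon>)) * L \<le> laplace_exponent \<nu> u"
    by (simp add: laplace_exponent_def)
  have "exp (- u * \<epsilon>) = exp (- 1)" using e by (simp add: u_def)
  also have "exp (- 1) \<le> (1 / 2 :: real)"
  proof -
    have "2 \<le> exp (1::real)" using exp_ge_add_one_self[of 1] by simp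
    then show ?thesis by (simp add: exp_minus field_simps)
  qed
  finally have "1 / 2 \<le> 1 - exp (- u * \<epsilon>)" by simp
  then have "(1/2) * L \<le> (1 - exp (- u * \<epsilon>)) * L" using L by (intro mult_right_mono) auto
  with psi L have "A \<le> laplace_exponent \<nu> u" by simp
  with u show ?thesis by blast
qed

lemma sub_ps: "subordinator M U \<psi> \<Longrightarrow> prob_space M"
  by (simp add: subordinator_def)

lemma sub_meas: "subordinator M U \<psi> \<Longrightarrow> t \<ge> 0 \<Longrightarrow> U t \<in> borel_measurable M"
  by (simp add: subordinator_def)

lemma sub_path: "subordinator M U \<psi> \<Longrightarrow> \<omega> \<in> space M \<Longrightarrow>
   U 0 \<omega> = 0 \<and> mono_on {0..} (\<lambda>t. U t \<omega>) \<and> (\<forall>t\<ge>0. continuous (at_right t) (\<lambda>s. U s \<omega>))"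
  by (simp add: subordinator_def)

lemma sub_lap: "subordinator M U \<psi> \<Longrightarrow> t \<ge> 0 \<Longrightarrow> u \<ge> 0 \<Longrightarrow>
   prob_space.expectation M (\<lambda>\<omega>. exp (- u * U t \<omega>)) = exp (- t * \<psi> u)"
  by (simp add: subordinator_def)

lemma sub_nonneg:
  assumes "subordinator M U \<psi>" "\<omega> \<in> space M" "t \<ge> 0"
  shows "U t \<omega> \<ge> 0"
proof -
  from sub_path[OF assms(1,2)] have "U 0 \<omega> = 0" "mono_on {0..} (\<lambda>t. U t \<omega>)" by auto
  then show ?thesis using assms(3) by (metis atLeast_iff mono_onD order_refl)
qed

lemma sub_mono:
  assumes "subordinator M U \<psi>" "\<omega> \<in> space M" "0 \<le> s" "s \<le> t"
  shows "U s \<omega> \<le> U t \<omega>"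
proof -
  from sub_path[OF assms(1,2)] have "mono_on {0..} (\<lambda>t. U t \<omega>)" by auto
  then show ?thesis using assms(3,4) by (auto intro: mono_onD)
qed

lemma chernoff:
  assumes sub: "subordinator M U \<psi>" and k: "k \<ge> 0" and u: "u \<ge> 0"
  shows "measure M {\<omega>\<in>space M. U k \<omega> \<le> T} \<le> exp (u * T) * exp (- k * \<psi> u)"
proof -
  interpret prob_space M by (rule sub_ps[OF sub])
  have [measurable]: "U k \<in> borel_measurable M" by (rule sub_meas[OF sub k])
  have int: "integrable M (\<lambda>\<omega>. exp (- u * U k \<omega>))"
  proof (rule integrable_const_bound[where B=1])
    show "AE x in M. norm (exp (- u * U k x)) \<le> 1"
      using sub_nonneg[OF sub _ k] u by (intro AE_I2) (simp add: mult_nonneg_nonneg)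
  qed measurable
  have "measure M {\<omega>\<in>space M. U k \<omega> \<le> T} = integral\<^sup>L M (indicator {\<omega>\<in>space M. U k \<omega> \<le> T})"
    by (simp add: Int_absorb2)
  also have "\<dots> \<le> integral\<^sup>L M (\<lambda>\<omega>. exp (u * T) * exp (- u * U k \<omega>))"
  proof (rule integral_mono)
    show "integrable M (indicator {\<omega>\<in>space M. U k \<omega> \<le> T} :: 'a \<Rightarrow> real)"
      by (intro integrable_real_indicator) (auto simp: less_top[symmetric])
    show "integrable M (\<lambda>\<omega>. exp (u * T) * exp (- u * U k \<omega>))"
      using int by simp
    fix \<omega> assume "\<omega> \<in> space M"
    show "indicator {\<omega>\<in>space M. U k \<omega> \<le> T} \<omega> \<le> exp (u * T) * exp (- u * U k \<omega>)"
    proof (cases "U k \<omega> \<le> T")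
      case True
      have "u * U k \<omega> \<le> u * T" using True u by (intro mult_left_mono)
      then have "0 \<le> u * T + - u * U k \<omega>" by simp
      then have "1 \<le> exp (u * T + - u * U k \<omega>)" by simp
      then have e: "1 \<le> exp (u * T) * exp (- u * U k \<omega>)" by (simp only: exp_add)
      then show ?thesis using True \<open>\<omega> \<in> space M\<close> by (simp add: indicator_def)
    qed simp
  qed
  also have "\<dots> = exp (u * T) * exp (- k * \<psi> u)"
    using sub_lap[OF sub k u] by simp
  finally show ?thesis .
qed

lemma S_le:
  assumes "\<tau> > 0" "U \<tau> \<omega> > T"
  shows "inverse_subordinator U T \<omega> \<le> \<tau>"
  unfolding inverse_subordinator_def
  by (rule cInf_lower) (use assms in \<open>auto intro!: bdd_belowI[of _ 0]\<close>)

lemma S_gt_imp: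
  assumes sub: "subordinator M U \<psi>" and "\<omega> \<in> space M" "k \<ge> 0" "T \<ge> 0"
    and "inverse_subordinator U T \<omega> > k"
  shows "U k \<omega> \<le> T"
proof (cases "k = 0")
  case True
  then show ?thesis using sub_path[OF sub assms(2)] assms by simp
next
  case False
  show ?thesis
  proof (rule ccontr)
    assume "\<not> U k \<omega> \<le> T"
    then have "inverse_subordinator U T \<omega> \<le> k" using False assms by (intro S_le) auto
    then show False using assms by simp
  qed
qed

lemma S_pos:
  assumes sub: "subordinator M U \<psi>" and T: "T > 0" and \<omega>: "\<omega> \<in> space M"
    and ne: "\<exists>\<tau>>0. U \<tau> \<omega> > T"
  shows "inverse_subordinator U T \<omega> > 0"
proof -
  from sub_path[OF sub \<omega>] have U0: "U 0 \<omega> = 0" and c: "continuous (at_right 0) (\<lambda>s. U s \<omega>)" by auto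
  have "((\<lambda>s. U s \<omega>) \<longlongrightarrow> U 0 \<omega>) (at_right 0)"
    using c by (simp add: continuous_within)
  then have "eventually (\<lambda>s. U s \<omega> < T) (at_right 0)"
    using T U0 by (intro order_tendstoD(2)) auto
  then obtain b where b: "b > 0" "\<And>s. 0 < s \<Longrightarrow> s < b \<Longrightarrow> U s \<omega> < T"
    by (auto simp: eventually_at_right_field)
  have "b \<le> Inf {\<tau>. \<tau> > 0 \<and> U \<tau> \<omega> > T}"
  proof (rule cInf_greatest)
    show "{\<tau>. \<tau> > 0 \<and> U \<tau> \<omega> > T} \<noteq> {}" using ne by auto
    fix x assume "x \<in> {\<tau>. \<tau> > 0 \<and> U \<tau> \<omega> > T}"
    then show "b \<le> x" using b(2)[of x] by (cases "x < b") auto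
  qed
  then show ?thesis using b unfolding inverse_subordinator_def by simp
qed

lemma AE_nonempty:
  assumes sub: "subordinator M U \<psi>" and u: "u \<ge> 0" and pu: "\<psi> u > 0"
  shows "AE \<omega> in M. \<exists>\<tau>>0. U \<tau> \<omega> > T"
proof -
  interpret prob_space M by (rule sub_ps[OF sub])
  have [measurable]: "U (real (Suc k)) \<in> borel_measurable M" for k by (rule sub_meas[OF sub]) simp
  define N where "N = {\<omega>\<in>space M. \<forall>k. U (real (Suc k)) \<omega> \<le> T}"
  have Nm: "N \<in> sets M" unfolding N_def by measurable
  have le: "measure M N \<le> exp (u * T) * exp (- real (Suc k) * \<psi> u)" for k
  proof -
    have Bm: "{\<omega>\<in>space M. U (real (Suc k)) \<omega> \<le> T} \<in> sets M" by measurable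
    have "N \<subseteq> {\<omega>\<in>space M. U (real (Suc k)) \<omega> \<le> T}" by (auto simp: N_def)
    then have "measure M N \<le> measure M {\<omega>\<in>space M. U (real (Suc k)) \<omega> \<le> T}"
      using Bm by (rule finite_measure_mono)
    also have "\<dots> \<le> exp (u * T) * exp (- real (Suc k) * \<psi> u)"
      by (rule chernoff[OF sub _ u]) simp
    finally show ?thesis .
  qed
  have lim0: "(\<lambda>k. exp (u * T) * exp (- real (Suc k) * \<psi> u)) \<longlonglongrightarrow> 0"
    using pu by real_asymp
  have "measure M N \<le> 0"
    using LIMSEQ_le_const[OF lim0, of "measure M N"] le by blast
  then have "measure M N = 0" using measure_nonneg[of M N] by linarith
  then have "emeasure M N = 0" using Nm by (simp add: emeasure_eq_measure)
  then have "N \<in> null_sets M" using Nm by auto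
  then show ?thesis
  proof (rule AE_I')
    show "{\<omega> \<in> space M. \<not> (\<exists>\<tau>>0. T < U \<tau> \<omega>)} \<subseteq> N"
    proof (auto simp: N_def not_less)
      fix x k assume "\<forall>\<tau>. \<tau> \<le> 0 \<or> U \<tau> x \<le> T"
      then have "(1 + real k) \<le> 0 \<or> U (1 + real k) x \<le> T" by blast
      then show "U (1 + real k) x \<le> T" by simp
    qed
  qed
qed

lemma S_less_iff:
  assumes sub: "subordinator M U \<psi>" and \<omega>: "\<omega> \<in> space M"
  shows "inverse_subordinator U T \<omega> < a \<longleftrightarrow>
    (\<exists>q\<in>\<rat> \<inter> {0<..<a}. T < U q \<omega>) \<or> ((\<forall>q\<in>\<rat> \<inter> {0<..}. \<not> T < U q \<omega>) \<and> Inf ({} :: real set) < a)"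
proof -
  define A where "A = {\<tau>. \<tau> > 0 \<and> U \<tau> \<omega> > T}"
  have S: "inverse_subordinator U T \<omega> = Inf A" by (simp add: inverse_subordinator_def A_def)
  have bdd: "bdd_below A" by (auto simp: A_def intro!: bdd_belowI[of _ 0])
  have upq: "\<exists>q\<in>\<rat> \<inter> {0<..<b}. T < U q \<omega>" if "\<tau> \<in> A" "\<tau> < b" for \<tau> b
  proof -
    obtain q where q: "q \<in> \<rat>" "\<tau> < q" "q < b" using Rats_dense_in_real[OF \<open>\<tau> < b\<close>] by blast
    have "U \<tau> \<omega> \<le> U q \<omega>" using that q by (intro sub_mono[OF sub \<omega>]) (auto simp: A_def)
    then show ?thesis using that q by (auto simp: A_def intro!: bexI[of _ q])
  qed
  show ?thesis
  proof (cases "A = {}")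
    case True
    then have "\<forall>q\<in>\<rat> \<inter> {0<..}. \<not> T < U q \<omega>" by (auto simp: A_def)
    then show ?thesis using True S by auto
  next
    case False
    then obtain \<tau> where "\<tau> \<in> A" by auto
    then have ex: "\<exists>q\<in>\<rat> \<inter> {0<..}. T < U q \<omega>" using upq[of \<tau> "\<tau> + 1"] by auto
    have "Inf A < a \<longleftrightarrow> (\<exists>q\<in>\<rat> \<inter> {0<..<a}. T < U q \<omega>)"
    proof
      assume "Inf A < a"
      then obtain x where "x \<in> A" "x < a" using cInf_lessD[OF False] by blast
      then show "\<exists>q\<in>\<rat> \<inter> {0<..<a}. T < U q \<omega>" by (rule upq)
    next
      assume "\<exists>q\<in>\<rat> \<inter> {0<..<a}. T < U q \<omega>"
      then obtain q where q: "q \<in> A" "q < a" by (auto simp: A_def)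
      have "Inf A \<le> q" by (rule cInf_lower[OF q(1) bdd])
      then show "Inf A < a" using q by simp
    qed
    then show ?thesis using S ex by auto
  qed
qed

lemma S_meas:
  assumes sub: "subordinator M U \<psi>"
  shows "inverse_subordinator U T \<in> borel_measurable M"
  unfolding borel_measurable_iff_less
proof
  fix a :: real
  have [measurable]: "U q \<in> borel_measurable M" if "q \<in> \<rat> \<inter> {0<..}" for q
    using that by (intro sub_meas[OF sub]) auto
  have [measurable]: "U q \<in> borel_measurable M" if "q \<in> \<rat> \<inter> {0<..<a}" for q
    using that by (intro sub_meas[OF sub]) auto
  have c1: "countable (\<rat> \<inter> {0<..<a})" by (rule countable_Int1[OF countable_rat])
  have c2: "countable (\<rat> \<inter> {0<..})" by (rule countable_Int1[OF countable_rat])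
  have "{w \<in> space M. inverse_subordinator U T w < a} =
    {w \<in> space M. (\<exists>q\<in>\<rat> \<inter> {0<..<a}. T < U q w) \<or> ((\<forall>q\<in>\<rat> \<inter> {0<..}. \<not> T < U q w) \<and> Inf ({} :: real set) < a)}"
    using S_less_iff[OF sub] by blast
  also have "\<dots> \<in> sets M"
    using c1 c2 by measurable
  finally show "{w \<in> space M. inverse_subordinator U T w < a} \<in> sets M" .
qed

lemma exp_moment:
  assumes sub: "subordinator M U \<psi>" and T: "T > 0" and a: "a \<ge> 0" and u: "u \<ge> 0"
    and pu: "\<psi> u \<ge> a + 1"
  shows "integrable M (\<lambda>\<omega>. exp (a * inverse_subordinator U T \<omega>))"
proof -
  interpret prob_space M by (rule sub_ps[OF sub])
  have Sm[measurable]: "inverse_subordinator U T \<in> borel_measurable M" by (rule S_meas[OF sub])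
  have Um[measurable]: "U (real k) \<in> borel_measurable M" for k :: nat by (rule sub_meas[OF sub]) simp
  have AEne: "AE \<omega> in M. \<exists>\<tau>>0. U \<tau> \<omega> > T"
    using pu a by (intro AE_nonempty[OF sub u]) auto
  define C where "C = exp (a + u * T)"
  define \<rho> where "\<rho> = exp (a - \<psi> u)"
  define g where "g k = C * \<rho> ^ k" for k :: nat
  have \<rho>: "0 \<le> \<rho>" "\<rho> < 1" using pu by (auto simp: \<rho>_def)
  have sg: "summable g" unfolding g_def using \<rho> by (intro summable_mult summable_geometric) simp
  have g0: "0 \<le> g k" for k using \<rho> by (simp add: g_def C_def)
  define B where "B k = {\<omega>\<in>space M. U (real k) \<omega> \<le> T}" for k :: nat
  have Bm[measurable]: "B k \<in> sets M" for k unfolding B_def by measurable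
  define c where "c k = exp (a * (real k + 1))" for k :: nat
  have tm: "ennreal (c k) * emeasure M (B k) \<le> ennreal (g k)" for k
  proof -
    have "measure M (B k) \<le> exp (u * T) * exp (- real k * \<psi> u)"
      unfolding B_def by (rule chernoff[OF sub _ u]) simp
    then have "c k * measure M (B k) \<le> c k * (exp (u * T) * exp (- real k * \<psi> u))"
      by (intro mult_left_mono) (auto simp: c_def)
    also have "\<dots> = g k"
    proof -
      have "\<rho> ^ k = exp (real k * (a - \<psi> u))" by (simp add: \<rho>_def exp_of_nat_mult)
      then show ?thesis
        by (simp add: g_def C_def c_def exp_add[symmetric] algebra_simps)
    qed
    finally have "c k * measure M (B k) \<le> g k" .
    then have "ennreal (c k * measure M (B k)) \<le> ennreal (g k)" by (rule ennreal_leI)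
    then show ?thesis by (simp add: emeasure_eq_measure ennreal_mult c_def)
  qed
  have pt: "AE \<omega> in M. ennreal (norm (exp (a * inverse_subordinator U T \<omega>)))
      \<le> (\<Sum>k. ennreal (c k) * indicator (B k) \<omega>)"
    using AEne AE_space
  proof (eventually_elim)
    case (elim \<omega>)
    then have True: "\<omega> \<in> space M" and ne: "\<exists>\<tau>>0. U \<tau> \<omega> > T" by auto
    show ?case
    proof -
      define S where "S = inverse_subordinator U T \<omega>"
      have S0: "S > 0" unfolding S_def using ne True by (intro S_pos[OF sub T]) auto
      define k where "k = nat (\<lceil>S\<rceil> - 1)"
      have kS: "real k < S" "S \<le> real k + 1"
        using S0 unfolding k_def by (auto simp: of_nat_diff) (linarith+)
      have "U (real k) \<omega> \<le> T"
        using kS T True unfolding S_def by (intro S_gt_imp[OF sub]) auto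
      then have "\<omega> \<in> B k" using True by (simp add: B_def)
      have "ennreal (norm (exp (a * S))) \<le> ennreal (c k)"
        using kS a by (auto simp: c_def intro!: ennreal_leI mult_left_mono)
      also have "\<dots> = ennreal (c k) * indicator (B k) \<omega>" using \<open>\<omega> \<in> B k\<close> by simp
      also have "\<dots> \<le> (\<Sum>k. ennreal (c k) * indicator (B k) \<omega>)"
      proof -
        have "(\<Sum>i\<in>{k}. ennreal (c i) * indicator (B i) \<omega>) \<le> (\<Sum>i. ennreal (c i) * indicator (B i) \<omega>)"
          by (rule sum_le_suminf[OF summableI]) auto
        then show ?thesis by (simp only: sum.insert[OF finite.emptyI] empty_iff not_False_eq_True sum.empty add.right_neutral)
      qed
      finally show ?thesis unfolding S_def .
    qed
  qed
  have "(\<integral>\<^sup>+ \<omega>. ennreal (norm (exp (a * inverse_subordinator U T \<omega>))) \<partial>M)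
      \<le> (\<integral>\<^sup>+ \<omega>. (\<Sum>k. ennreal (c k) * indicator (B k) \<omega>) \<partial>M)"
    by (rule nn_integral_mono_AE[OF pt])
  also have "\<dots> = (\<Sum>k. \<integral>\<^sup>+ \<omega>. ennreal (c k) * indicator (B k) \<omega> \<partial>M)"
    by (rule nn_integral_suminf) measurable
  also have "\<dots> = (\<Sum>k. ennreal (c k) * emeasure M (B k))"
    by (simp add: nn_integral_cmult_indicator)
  also have "\<dots> \<le> (\<Sum>k. ennreal (g k))"
    by (intro suminf_le summableI tm)
  also have "\<dots> = ennreal (\<Sum>k. g k)" by (rule suminf_ennreal2[OF g0 sg])
  also have "\<dots> < \<infinity>" by simp
  finally show ?thesis by (intro integrableI_bounded) auto
qed

lemma crr_fplus:
  assumes "Z0 > 0"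
  shows "crr_price r \<sigma> Z0 f n \<tau> = crr_price r \<sigma> Z0 (\<lambda>x. f (max 0 x)) n \<tau>"
  unfolding crr_price_def Let_def using assms
  by (intro arg_cong2[where f="(*)"] refl sum.cong) (auto simp: max_def)

lemma bs_fplus:
  assumes "Z0 > 0"
  shows "bs_price r \<sigma> Z0 f \<tau> = bs_price r \<sigma> Z0 (\<lambda>x. f (max 0 x)) \<tau>"
  unfolding bs_price_def using assms
  by (intro arg_cong2[where f="(*)"] refl Bochner_Integration.integral_cong) (auto simp: max_def)

lemma fplus_meas:
  fixes f :: "real \<Rightarrow> real"
  assumes "continuous_on {0..} f"
  shows "(\<lambda>x. f (max 0 x)) \<in> borel_measurable borel"
proof -
  have "continuous_on UNIV (\<lambda>x::real. f (max 0 x))"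
    by (rule continuous_on_compose2[OF assms, of UNIV "\<lambda>x. max 0 x"]) (auto intro!: continuous_intros)
  then show ?thesis by (rule borel_measurable_continuous_onI)
qed

lemma crr_meas:
  assumes [measurable]: "g \<in> borel_measurable borel"
  shows "(\<lambda>\<tau>. crr_price r \<sigma> Z0 g n \<tau>) \<in> borel_measurable borel"
  unfolding crr_price_def Let_def by measurable

lemma bs_meas:
  assumes [measurable]: "g \<in> borel_measurable borel"
  shows "(\<lambda>\<tau>. bs_price r \<sigma> Z0 g \<tau>) \<in> borel_measurable borel"
proof -
  interpret N: prob_space std_normal_distribution
    using real_dist_normal_dist by (simp add: real_distribution_def)
  have [measurable_cong]: "sets std_normal_distribution = sets borel" by simp
  show ?thesis unfolding bs_price_def by measurable
qed

theorem theorem3: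
  fixes M :: "'a measure" and U :: "real \<Rightarrow> 'a \<Rightarrow> real" and \<nu> :: "real measure"
    and f :: "real \<Rightarrow> real" and T Z0 r \<sigma> c :: real
  assumes "levy_measure \<nu>"
    and "subordinator M U (laplace_exponent \<nu>)"
    and "T > 0" and "Z0 > 0" and "r \<ge> 0" and "\<sigma> > 0"
    and "continuous_on {0..} f"
    and "\<forall>x\<ge>0. f x \<ge> 0"
    and "c > 0" and "\<forall>x\<ge>0. f x \<le> c * \<bar>x\<bar>"
  shows "(\<lambda>n. prob_space.expectation M
              (\<lambda>\<omega>. crr_price r \<sigma> Z0 f n (inverse_subordinator U T \<omega>)))
         \<longlonglongrightarrow> prob_space.expectation M
              (\<lambda>\<omega>. bs_price r \<sigma> Z0 f (inverse_subordinator U T \<omega>))"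
proof -
  note lv = assms(1) and sub = assms(2)
  interpret prob_space M by (rule sub_ps[OF sub])
  define S where "S = inverse_subordinator U T"
  have Sm[measurable]: "S \<in> borel_measurable M" unfolding S_def by (rule S_meas[OF sub])
  define a where "a = r^3 / \<sigma>^4"
  have a0: "a \<ge> 0" using assms by (simp add: a_def)
  obtain u where u: "u \<ge> 0" "laplace_exponent \<nu> u \<ge> a + 1"
    using psi_large[OF lv, of "a + 1"] by blast
  have int_w: "integrable M (\<lambda>\<omega>. c * Z0 * exp (a * S \<omega>))"
    unfolding S_def by (intro integrable_mult_right exp_moment[OF sub assms(3) a0 u])
  have AEpos: "AE \<omega> in M. S \<omega> > 0"
  proof -
    have "AE \<omega> in M. \<exists>\<tau>>0. U \<tau> \<omega> > T"
      using u a0 by (intro AE_nonempty[OF sub u(1)]) auto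
    with AE_space show ?thesis
      by eventually_elim (auto simp: S_def intro!: S_pos[OF sub assms(3)])
  qed
  have fp[measurable]: "(\<lambda>x. f (max 0 x)) \<in> borel_measurable borel" by (rule fplus_meas[OF assms(7)])
  have crr_m[measurable]: "(\<lambda>\<tau>. crr_price r \<sigma> Z0 f n \<tau>) \<in> borel_measurable borel" for n
  proof -
    have eq: "(\<lambda>\<tau>. crr_price r \<sigma> Z0 f n \<tau>) = (\<lambda>\<tau>. crr_price r \<sigma> Z0 (\<lambda>x. f (max 0 x)) n \<tau>)"
      by (intro ext crr_fplus assms(4))
    show ?thesis by (simp only: eq crr_meas[OF fp])
  qed
  have bs_m[measurable]: "(\<lambda>\<tau>. bs_price r \<sigma> Z0 f \<tau>) \<in> borel_measurable borel"
  proof -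
    have eq: "(\<lambda>\<tau>. bs_price r \<sigma> Z0 f \<tau>) = (\<lambda>\<tau>. bs_price r \<sigma> Z0 (\<lambda>x. f (max 0 x)) \<tau>)"
      by (intro ext bs_fplus assms(4))
    show ?thesis by (simp only: eq bs_meas[OF fp])
  qed
  have "(\<lambda>n. expectation (\<lambda>\<omega>. crr_price r \<sigma> Z0 f (Suc n) (S \<omega>))) \<longlonglongrightarrow> expectation (\<lambda>\<omega>. bs_price r \<sigma> Z0 f (S \<omega>))"
  proof (rule integral_dominated_convergence[OF _ _ int_w])
    show "(\<lambda>\<omega>. bs_price r \<sigma> Z0 f (S \<omega>)) \<in> borel_measurable M" by measurable
    show "(\<lambda>\<omega>. crr_price r \<sigma> Z0 f (Suc n) (S \<omega>)) \<in> borel_measurable M" for n by measurable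
    show "AE \<omega> in M. (\<lambda>n. crr_price r \<sigma> Z0 f (Suc n) (S \<omega>)) \<longlonglongrightarrow> bs_price r \<sigma> Z0 f (S \<omega>)"
      using AEpos
    proof eventually_elim
      case (elim \<omega>)
      have "(\<lambda>n. crr_price r \<sigma> Z0 f n (S \<omega>)) \<longlonglongrightarrow> bs_price r \<sigma> Z0 f (S \<omega>)"
        using elim assms by (intro main_lim[of "S \<omega>" r \<sigma> Z0 c f]) auto
      then show ?case by (rule LIMSEQ_Suc)
    qed
    show "AE \<omega> in M. norm (crr_price r \<sigma> Z0 f (Suc n) (S \<omega>)) \<le> c * Z0 * exp (a * S \<omega>)" for n
      using AEpos
    proof eventually_elim
      case (elim \<omega>)
      have "\<bar>crr_price r \<sigma> Z0 f (Suc n) (S \<omega>)\<bar> \<le> c * Z0 * exp (r^3 / \<sigma>^4 * S \<omega>)"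
        using elim assms by (intro crr_bound) auto
      then show ?case by (simp add: a_def)
    qed
  qed
  then show ?thesis unfolding S_def by (rule LIMSEQ_imp_Suc)
qed

end
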